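(* Suppose (A.1) and (A.2) hold, $k_n\to\infty$, $\log(k_n)/\log(n)\to0$ and $k_n^{1/2}b(\log(n/k_n))\to\lambda\in\mathbb{R}$. (i) Suppose $b$ is ultimately non-positive and let $\alpha=-4\lim_{n\to\infty}b(\log n)\,k_n/\log k_n\in[0,+\infty]$ (assumed to exist). If $\alpha>\theta$, then for $n$ large enough $AMSE(\hat\theta_n^{(2)})<AMSE(\hat\theta_n^{(1)})<AMSE(\hat\theta_n^{(3)})$. If $\alpha<\theta$, then for $n$ large enough $AMSE(\hat\theta_n^{(1)})<\min(AMSE(\hat\theta_n^{(2)}),AMSE(\hat\theta_n^{(3)}))$. (ii) Suppose $b$ is ultimately non-negative and let $\beta=2\lim_{x\to\infty}x\,b(x)\in[0,+\infty]$ (assumed to exist). If $\beta>\theta$, then for $n$ large enough $AMSE(\hat\theta_n^{(3)})<AMSE(\hat\theta_n^{(1)})<AMSE(\hat\theta_n^{(2)})$. If $\beta<\theta$, then for $n$ large enough $AMSE(\hat\theta_n^{(1)})<\min(AMSE(\hat\theta_n^{(2)}),AMSE(\hat\theta_n^{(3)}))$.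
   Context: Let $X_1,\dots,X_n$ be i.i.d. with cdf $F$, order statistics $X_{1,n}\le\dots\le X_{n,n}$, and $1\le k_n<n$. Assumption (A.1): there is $\theta>0$ such that $1-F(x)=\exp(-H(x))$ for $x\ge x_0\ge0$, and $H^{\leftarrow}(t)=\inf\{x:H(x)\ge t\}=t^\theta\ell(t)$ with $\ell$ slowly varying at infinity. Assumption (A.2): there exist $\rho\le0$ and $b$ with $b(x)\to0$ such that, uniformly locally on $\lambda\ge1$, $\log(\ell(\lambda x)/\ell(x))\sim b(x)K_\rho(\lambda)$ as $x\to\infty$, where $K_\rho(\lambda)=\int_1^\lambda u^{\rho-1}du$ (so $|b|$ is regularly varying with index $\rho$). Let $\mu_0(t)=\int_0^\infty\log(1+x/t)e^{-x}dx$, $T_n^{(1)}=\mu_0(\log(n/k_n))$, $T_n^{(2)}=\frac1{k_n}\sum_{i=1}^{k_n}\log\left(1-\frac{\log(i/k_n)}{\log(n/k_n)}\right)$, $T_n^{(3)}=1/\log(n/k_n)$, $\hat\theta_n^{(i)}=\frac{1}{T_n^{(i)}}\frac1{k_n}\sum_{j=1}^{k_n}(\log X_{n-j+1,n}-\log X_{n-k_n+1,n})$, and $a_n^{(i)}=\mu_0(\log(n/k_n))/T_n^{(i)}-1$. The asymptotic mean square error is defined by $AMSE(\hat\theta_n^{(i)})=(\theta a_n^{(i)}+b(\log(n/k_n)))^2+\theta^2/k_n$. *)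

theory Defs
  imports "HOL-Analysis.Analysis"
begin

definition is_cdf :: "(real \<Rightarrow> real) \<Rightarrow> bool" where
  "is_cdf F \<longleftrightarrow> mono F \<and> (\<forall>x. continuous (at_right x) F)
     \<and> (F \<longlongrightarrow> 0) at_bot \<and> (F \<longlongrightarrow> 1) at_top"

definition slowly_varying :: "(real \<Rightarrow> real) \<Rightarrow> bool" where
  "slowly_varying L \<longleftrightarrow> (\<forall>\<^sub>F x in at_top. L x > 0)
     \<and> (\<forall>c>0. ((\<lambda>x. L (c * x) / L x) \<longlongrightarrow> 1) at_top)"

definition gen_inv :: "real \<Rightarrow> (real \<Rightarrow> real) \<Rightarrow> real \<Rightarrow> real" where
  "gen_inv x0 H t = Inf {x. x0 \<le> x \<and> t \<le> H x}"

definition K_fun :: "real \<Rightarrow> real \<Rightarrow> real" where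
  "K_fun \<rho> lam = integral {1..lam} (\<lambda>u. u powr (\<rho> - 1))"

definition assm_A1 :: "(real \<Rightarrow> real) \<Rightarrow> real \<Rightarrow> (real \<Rightarrow> real) \<Rightarrow> real \<Rightarrow> (real \<Rightarrow> real) \<Rightarrow> bool" where
  "assm_A1 F \<theta> H x0 ell \<longleftrightarrow> \<theta> > 0 \<and> x0 \<ge> 0
     \<and> (\<forall>x\<ge>x0. 1 - F x = exp (- H x))
     \<and> (\<forall>\<^sub>F t in at_top. gen_inv x0 H t = t powr \<theta> * ell t)
     \<and> slowly_varying ell"

definition assm_A2 :: "(real \<Rightarrow> real) \<Rightarrow> real \<Rightarrow> (real \<Rightarrow> real) \<Rightarrow> bool" where
  "assm_A2 ell \<rho> b \<longleftrightarrow> \<rho> \<le> 0 \<and> (b \<longlongrightarrow> 0) at_top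
     \<and> (\<forall>\<^sub>F x in at_top. b x \<noteq> 0)
     \<and> (\<forall>\<Lambda>\<ge>1. \<forall>\<epsilon>>0. \<forall>\<^sub>F x in at_top. \<forall>lam\<in>{1..\<Lambda>}.
          \<bar>ln (ell (lam * x) / ell x) - b x * K_fun \<rho> lam\<bar> \<le> \<epsilon> * \<bar>b x * K_fun \<rho> lam\<bar>)"

definition mu0 :: "real \<Rightarrow> real" where
  "mu0 t = (LBINT x:{0..}. ln (1 + x / t) * exp (- x))"

definition T1 :: "nat \<Rightarrow> nat \<Rightarrow> real" where
  "T1 n k = mu0 (ln (real n / real k))"

definition T2 :: "nat \<Rightarrow> nat \<Rightarrow> real" where
  "T2 n k = (1 / real k) * (\<Sum>i=1..k. ln (1 - ln (real i / real k) / ln (real n / real k)))"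

definition T3 :: "nat \<Rightarrow> nat \<Rightarrow> real" where
  "T3 n k = 1 / ln (real n / real k)"

definition a_n :: "(nat \<Rightarrow> nat \<Rightarrow> real) \<Rightarrow> nat \<Rightarrow> nat \<Rightarrow> real" where
  "a_n T n k = mu0 (ln (real n / real k)) / T n k - 1"

definition AMSE :: "(nat \<Rightarrow> nat \<Rightarrow> real) \<Rightarrow> real \<Rightarrow> (real \<Rightarrow> real) \<Rightarrow> nat \<Rightarrow> nat \<Rightarrow> real" where
  "AMSE T \<theta> b n k = (\<theta> * a_n T n k + b (ln (real n / real k)))\<^sup>2 + \<theta>\<^sup>2 / real k"

end

theory Submission
  imports Defs "HOL-Real_Asymp.Real_Asymp"
begin

lemma ln_lower2: fixes y :: real assumes "0 \<le> y" shows "y - y^2/2 \<le> ln (1+y)"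
proof -
  let ?p = "\<lambda>z::real. ln (1+z) - z + z^2/2"
  have "?p 0 \<le> ?p y"
  proof (rule DERIV_nonneg_imp_nondecreasing[OF assms])
    fix z :: real assume z: "0 \<le> z" "z \<le> y"
    have "(?p has_real_derivative (1/(1+z) - 1 + z)) (at z)"
      using z by (auto intro!: derivative_eq_intros)
    moreover have "1/(1+z) - 1 + z \<ge> 0" using z by (simp add: field_simps)
    ultimately show "\<exists>d. (?p has_real_derivative d) (at z) \<and> 0 \<le> d" by blast
  qed
  then show ?thesis by simp
qed

lemma ln_upper3: fixes y :: real assumes "0 \<le> y" shows "ln (1+y) \<le> y - y^2/2 + y^3/3"
proof -
  let ?p = "\<lambda>z::real. z - z^2/2 + z^3/3 - ln (1+z)"
  have "?p 0 \<le> ?p y"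
  proof (rule DERIV_nonneg_imp_nondecreasing[OF assms])
    fix z :: real assume z: "0 \<le> z" "z \<le> y"
    have "(?p has_real_derivative (1 - z + z^2 - 1/(1+z))) (at z)"
      using z by (auto intro!: derivative_eq_intros simp: power2_eq_square)
    moreover have "1 - z + z^2 - 1/(1+z) \<ge> 0" using z by (simp add: field_simps power2_eq_square)
    ultimately show "\<exists>d. (?p has_real_derivative d) (at z) \<and> 0 \<le> d" by blast
  qed
  then show ?thesis by simp
qed

lemma has_bochner_Ici:
  fixes \<phi> \<Phi> :: "real \<Rightarrow> real"
  assumes meas: "\<phi> \<in> borel_measurable borel"
    and der: "\<And>x. a \<le> x \<Longrightarrow> (\<Phi> has_real_derivative \<phi> x) (at x)"
    and nn: "\<And>x. a \<le> x \<Longrightarrow> 0 \<le> \<phi> x"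
    and lim: "(\<Phi> \<longlongrightarrow> T) at_top"
  shows "has_bochner_integral lborel (\<lambda>x. indicator {a..} x * \<phi> x) (T - \<Phi> a)"
proof (rule has_bochner_integral_nn_integral)
  show "(\<lambda>x. indicator {a..} x * \<phi> x) \<in> borel_measurable lborel" using meas by measurable
  show "AE x in lborel. 0 \<le> indicator {a..} x * \<phi> x"
    using nn by (auto split: split_indicator)
  have mono: "\<Phi> a \<le> \<Phi> x" if "a \<le> x" for x
    using that by (intro DERIV_nonneg_imp_nondecreasing[of a x \<Phi>]) (use der nn in \<open>auto\<close>)
  show "0 \<le> T - \<Phi> a"
    using tendsto_lowerbound[OF lim, of "\<Phi> a"] mono
    by (auto simp: eventually_at_top_linorder)
  have "(\<integral>\<^sup>+x. ennreal (\<phi> x) * indicator {a ..} x \<partial>lborel) = T - \<Phi> a"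
    by (rule nn_integral_FTC_atLeast[OF meas]) (use der nn lim in auto)
  moreover have "(\<integral>\<^sup>+x. ennreal (indicator {a..} x * \<phi> x) \<partial>lborel) = (\<integral>\<^sup>+x. ennreal (\<phi> x) * indicator {a ..} x \<partial>lborel)"
    by (intro nn_integral_cong) (auto split: split_indicator)
  ultimately show "(\<integral>\<^sup>+x. ennreal (indicator {a..} x * \<phi> x) \<partial>lborel) = ennreal (T - \<Phi> a)" by simp
qed

lemma mom1: "has_bochner_integral lborel (\<lambda>x. indicator {0..} x * (x * exp (-x))) (1::real)"
proof -
  have "has_bochner_integral lborel (\<lambda>x. indicator {0..} x * (x * exp (-x))) (0 - (- (0+1)*exp(-0::real)))"
    by (rule has_bochner_Ici[where \<Phi>="\<lambda>x. -(x+1)*exp(-x)"])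
       (auto intro!: derivative_eq_intros simp: algebra_simps, real_asymp)
  then show ?thesis by simp
qed

lemma mom2: "has_bochner_integral lborel (\<lambda>x. indicator {0..} x * (x^2 * exp (-x))) (2::real)"
proof -
  have "has_bochner_integral lborel (\<lambda>x. indicator {0..} x * (x^2 * exp (-x))) (0 - (- (0^2+2*0+2)*exp(-0::real)))"
    by (rule has_bochner_Ici[where \<Phi>="\<lambda>x. -(x^2+2*x+2)*exp(-x)"])
       (auto intro!: derivative_eq_intros simp: algebra_simps power2_eq_square, real_asymp)
  then show ?thesis by simp
qed

lemma mom3: "has_bochner_integral lborel (\<lambda>x. indicator {0..} x * (x^3 * exp (-x))) (6::real)"
proof -
  have "has_bochner_integral lborel (\<lambda>x. indicator {0..} x * (x^3 * exp (-x))) (0 - (- (0^3+3*0^2+6*0+6)*exp(-0::real)))"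
    by (rule has_bochner_Ici[where \<Phi>="\<lambda>x. -(x^3+3*x^2+6*x+6)*exp(-x)"])
       (auto intro!: derivative_eq_intros simp: algebra_simps power2_eq_square power3_eq_cube, real_asymp)
  then show ?thesis by simp
qed

definition hh :: "real \<Rightarrow> real \<Rightarrow> real" where "hh t x = ln (1 + x / t) * exp (- x)"

lemma mu0_eq: "mu0 t = integral\<^sup>L lborel (\<lambda>x. indicator {0..} x * hh t x)"
  unfolding mu0_def set_lebesgue_integral_def hh_def by simp

lemma hh_meas: "hh t \<in> borel_measurable borel"
  unfolding hh_def by measurable

lemma hh_integrable:
  assumes "t > 0"
  shows "integrable lborel (\<lambda>x. indicator {0..} x * hh t x)"
proof (rule Bochner_Integration.integrable_bound)
  show "integrable lborel (\<lambda>x. (1/t) * (indicator {0..} x * (x * exp (-x))))"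
    using mom1 by (intro integrable_mult_right) (auto simp: has_bochner_integral_iff)
  show "(\<lambda>x. indicator {0..} x * hh t x) \<in> borel_measurable lborel" using hh_meas by measurable
  show "AE x in lborel. norm (indicator {0..} x * hh t x) \<le> norm ((1/t) * (indicator {0..} x * (x * exp (-x))))"
  proof (rule AE_I2)
    fix x :: real
    show "norm (indicator {0..} x * hh t x) \<le> norm ((1/t) * (indicator {0..} x * (x * exp (-x))))"
    proof (cases "0 \<le> x")
      case True
      have "0 \<le> ln (1 + x/t)" using True assms by simp
      moreover have "ln (1 + x/t) \<le> x/t" using True assms by (intro ln_add_one_self_le_self) simp
      moreover have "ln (1 + x/t) * exp (-x) \<le> (x/t) * exp (-x)"
        using calculation by (intro mult_right_mono) auto
      ultimately show ?thesis using True assms by (simp add: hh_def abs_mult)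
    qed simp
  qed
qed

lemma mu0_bounds:
  assumes "t > 0"
  shows "1/t - 1/t^2 \<le> mu0 t" "mu0 t \<le> 1/t - 1/t^2 + 2/t^3"
proof -
  have lo: "has_bochner_integral lborel (\<lambda>x. (1/t) * (indicator {0..} x * (x * exp (-x))) - (1/(2*t^2)) * (indicator {0..} x * (x^2 * exp (-x)))) (1/t * 1 - 1/(2*t^2) * 2)"
    by (intro has_bochner_integral_diff has_bochner_integral_mult_right mom1 mom2)
  have hi: "has_bochner_integral lborel (\<lambda>x. (1/t) * (indicator {0..} x * (x * exp (-x))) - (1/(2*t^2)) * (indicator {0..} x * (x^2 * exp (-x))) + (1/(3*t^3)) * (indicator {0..} x * (x^3 * exp (-x)))) (1/t * 1 - 1/(2*t^2) * 2 + 1/(3*t^3) * 6)"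
    by (intro has_bochner_integral_add has_bochner_integral_diff has_bochner_integral_mult_right mom1 mom2 mom3)
  have "1/t * 1 - 1/(2*t^2) * 2 \<le> integral\<^sup>L lborel (\<lambda>x. indicator {0..} x * hh t x)"
    unfolding has_bochner_integral_integral_eq[OF lo, symmetric]
  proof (rule integral_mono)
    show "integrable lborel (\<lambda>x. indicator {0..} x * hh t x)" using hh_integrable[OF assms] .
    show "integrable lborel (\<lambda>x. (1/t) * (indicator {0..} x * (x * exp (-x))) - (1/(2*t^2)) * (indicator {0..} x * (x^2 * exp (-x))))"
      using lo by (auto simp: has_bochner_integral_iff)
    fix x :: real
    show "(1/t) * (indicator {0..} x * (x * exp (-x))) - (1/(2*t^2)) * (indicator {0..} x * (x^2 * exp (-x))) \<le> indicator {0..} x * hh t x"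
    proof (cases "0 \<le> x")
      case True
      have "x/t - (x/t)^2/2 \<le> ln (1 + x/t)" using True assms by (intro ln_lower2) simp
      then have "(x/t - (x/t)^2/2) * exp (-x) \<le> ln (1 + x/t) * exp (-x)" by (intro mult_right_mono) auto
      then show ?thesis using True assms by (simp add: hh_def field_simps power2_eq_square)
    qed simp
  qed
  then show "1/t - 1/t^2 \<le> mu0 t" by (simp add: mu0_eq power2_eq_square)
  have "integral\<^sup>L lborel (\<lambda>x. indicator {0..} x * hh t x) \<le> 1/t * 1 - 1/(2*t^2) * 2 + 1/(3*t^3) * 6"
    unfolding has_bochner_integral_integral_eq[OF hi, symmetric]
  proof (rule integral_mono)
    show "integrable lborel (\<lambda>x. indicator {0..} x * hh t x)" using hh_integrable[OF assms] .
    show "integrable lborel (\<lambda>x. (1/t) * (indicator {0..} x * (x * exp (-x))) - (1/(2*t^2)) * (indicator {0..} x * (x^2 * exp (-x))) + (1/(3*t^3)) * (indicator {0..} x * (x^3 * exp (-x))))"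
      using hi by (auto simp: has_bochner_integral_iff)
    fix x :: real
    show "indicator {0..} x * hh t x \<le> (1/t) * (indicator {0..} x * (x * exp (-x))) - (1/(2*t^2)) * (indicator {0..} x * (x^2 * exp (-x))) + (1/(3*t^3)) * (indicator {0..} x * (x^3 * exp (-x)))"
    proof (cases "0 \<le> x")
      case True
      have "ln (1 + x/t) \<le> x/t - (x/t)^2/2 + (x/t)^3/3" using True assms by (intro ln_upper3) simp
      then have "ln (1 + x/t) * exp (-x) \<le> (x/t - (x/t)^2/2 + (x/t)^3/3) * exp (-x)" by (intro mult_right_mono) auto
      then show ?thesis using True assms by (simp add: hh_def field_simps power2_eq_square power3_eq_cube)
    qed simp
  qed
  then show "mu0 t \<le> 1/t - 1/t^2 + 2/t^3" by (simp add: mu0_eq power2_eq_square power3_eq_cube)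
qed

definition ff :: "real \<Rightarrow> real \<Rightarrow> real" where "ff t u = ln (1 - ln u / t)"

lemma hh_ff: "hh t x = ff t (exp (-x)) * exp (-x)"
  unfolding hh_def ff_def by simp

definition ff1 :: "real \<Rightarrow> real \<Rightarrow> real" where "ff1 t u = - 1 / (u * (t - ln u))"
definition ff2 :: "real \<Rightarrow> real \<Rightarrow> real" where "ff2 t u = (t - ln u - 1) / (u^2 * (t - ln u)^2)"

lemma ff_deriv:
  assumes "t \<ge> 2" "0 < u" "u \<le> exp 1"
  shows "(ff t has_real_derivative ff1 t u) (at u)"
proof -
  have "ln u \<le> 1" using assms by (metis ln_exp ln_le_cancel_iff exp_gt_zero)
  then have pos: "t - ln u > 0" using assms by simp
  then have "1 - ln u / t > 0" using assms by (simp add: field_simps)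
  then show ?thesis unfolding ff_def ff1_def
    using assms pos by (auto intro!: derivative_eq_intros simp: field_simps)
qed

lemma ff1_deriv:
  assumes "t \<ge> 2" "0 < u" "u \<le> exp 1"
  shows "(ff1 t has_real_derivative ff2 t u) (at u)"
proof -
  have "ln u \<le> 1" using assms by (metis ln_exp ln_le_cancel_iff exp_gt_zero)
  then have pos: "t - ln u > 0" using assms by simp
  have ne: "u * (t - ln u) \<noteq> 0" using assms pos by simp
  have "((\<lambda>u. - 1 / (u * (t - ln u))) has_real_derivative - ((1 * (t - ln u) + u * (0 - 1/u)) / (u * (t - ln u))^2 * (-1))) (at u)"
    using assms pos ne
    by (intro derivative_eq_intros DERIV_divide[where f="\<lambda>_. -1", THEN DERIV_cong]) (auto simp: power2_eq_square)
  moreover have "- ((1 * (t - ln u) + u * (0 - 1/u)) / (u * (t - ln u))^2 * (-1)) = ff2 t u"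
  proof -
    have "u * (0 - 1/u) = -1" using assms by simp
    then show ?thesis unfolding ff2_def by (simp add: power_mult_distrib)
  qed
  ultimately show ?thesis unfolding ff1_def by simp
qed

lemma ff2_nonneg:
  assumes "t \<ge> 2" "0 < u" "u \<le> exp 1"
  shows "ff2 t u \<ge> 0"
proof -
  have "ln u \<le> 1" using assms by (metis ln_exp ln_le_cancel_iff exp_gt_zero)
  then show ?thesis using assms unfolding ff2_def by (intro divide_nonneg_pos) auto
qed

lemma ff_convex: assumes "t \<ge> 2" shows "convex_on {0<..exp 1} (ff t)"
  by (rule f''_ge0_imp_convex[where f'="ff1 t" and f''="ff2 t"])
     (use assms ff_deriv ff1_deriv ff2_nonneg in auto)

lemma ff_tangent:
  assumes "t \<ge> 2" "0 < m" "m \<le> exp 1" "0 < u" "u \<le> exp 1"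
  shows "ff t m + ff1 t m * (u - m) \<le> ff t u"
  using f''_imp_f'[where C="{0<..exp 1}" and f="ff t" and f'="ff1 t" and f''="ff2 t" and x=m and y=u]
    assms ff_deriv ff1_deriv ff2_nonneg by auto

lemma ff_chord:
  assumes "t \<ge> 2" "0 < p" "p < q" "q \<le> exp 1" "p \<le> u" "u \<le> q"
  shows "ff t u \<le> ff t p + (ff t q - ff t p) / (q - p) * (u - p)"
proof -
  define l where "l = (u - p) / (q - p)"
  have l: "0 \<le> l" "l \<le> 1" using assms by (auto simp: field_simps l_def)
  have qp: "q - p \<noteq> 0" using assms by simp
  have "l * (q - p) = u - p" using qp by (simp add: l_def)
  then have u: "u = (1 - l) * p + l * q" by (simp add: algebra_simps)
  have "ff t ((1 - l) * p + l * q) \<le> (1 - l) * ff t p + l * ff t q"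
    using convex_onD[OF ff_convex[OF assms(1)], of l p q] l assms by auto
  then have "ff t u \<le> (1 - l) * ff t p + l * ff t q" using u by simp
  then have "ff t u \<le> ff t p + l * (ff t q - ff t p)" by (simp add: algebra_simps)
  then show ?thesis by (simp add: l_def mult.commute)
qed

lemma ff_midconv:
  assumes "t \<ge> 2" "0 < p" "q \<le> exp 1" "p \<le> q"
  shows "ff t ((p + q)/2) \<le> (ff t p + ff t q) / 2"
  using convex_onD[OF ff_convex[OF assms(1)], of "1/2" p q] assms by (auto simp: field_simps)

lemma lin_integral:
  fixes c0 c1 p q :: real
  assumes "0 < p" "p < q"
  shows "((\<lambda>x. (c0 + c1 * exp (-x)) * exp (-x)) has_integral (c0 * (q - p) + c1 * (q^2 - p^2) / 2)) {-ln q..-ln p}"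
proof -
  let ?F = "\<lambda>x::real. - c0 * exp (-x) - c1 * (exp (-x))^2 / 2"
  have "((\<lambda>x. (c0 + c1 * exp (-x)) * exp (-x)) has_integral (?F (-ln p) - ?F (-ln q))) {-ln q..-ln p}"
  proof (rule fundamental_theorem_of_calculus)
    show "-ln q \<le> -ln p" using assms by simp
    fix x assume "x \<in> {-ln q..-ln p}"
    show "(?F has_vector_derivative (c0 + c1 * exp (-x)) * exp (-x)) (at x within {-ln q..-ln p})"
      by (auto intro!: derivative_eq_intros simp: has_real_derivative_iff_has_vector_derivative[symmetric] power2_eq_square algebra_simps)
  qed
  moreover have "?F (-ln p) - ?F (-ln q) = c0 * (q - p) + c1 * (q^2 - p^2) / 2"
    using assms by (simp add: field_simps)
  ultimately show ?thesis by simp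
qed

lemma hh_cont: assumes "t > 0" "0 \<le> a" shows "continuous_on {a..b} (hh t)"
proof -
  have *: "\<And>x. a \<le> x \<Longrightarrow> x \<le> b \<Longrightarrow> 1 + x / t \<noteq> 0"
  proof -
    fix x assume "a \<le> x" "x \<le> b"
    then have "0 \<le> x / t" using assms by (intro divide_nonneg_pos) auto
    then show "1 + x / t \<noteq> 0" by simp
  qed
  then show ?thesis unfolding hh_def using assms * by (auto intro!: continuous_intros)
qed

lemma piece_bounds:
  assumes t: "t \<ge> 2" and pq: "0 < p" "p < q" "q \<le> 1"
  shows "(q - p) * ff t ((p+q)/2) \<le> integral {-ln q..-ln p} (hh t)"
    "integral {-ln q..-ln p} (hh t) \<le> (q - p) * (ff t p + ff t q) / 2"
proof -
  have e1: "1 \<le> exp (1::real)" by simp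
  have int: "hh t integrable_on {-ln q..-ln p}"
    using hh_cont[of t "-ln q" "-ln p"] t pq by (intro integrable_continuous_real) auto
  have xu: "p \<le> exp (-x) \<and> exp (-x) \<le> q" if "x \<in> {-ln q..-ln p}" for x
  proof -
    have "exp (-(-ln p)) \<le> exp (-x)" "exp (-x) \<le> exp (-(-ln q))" using that by auto
    then show ?thesis using pq by simp
  qed
  define m where "m = (p + q) / 2"
  have m1: "m \<le> 1" using pq by (simp add: m_def)
  have m0: "0 < m" using pq by (simp add: m_def)
  have m: "0 < m" "m \<le> exp 1" using m0 m1 e1 by linarith+
  let ?c0 = "ff t m - ff1 t m * m" and ?c1 = "ff1 t m"
  have L: "((\<lambda>x. (?c0 + ?c1 * exp (-x)) * exp (-x)) has_integral (?c0 * (q - p) + ?c1 * (q^2 - p^2) / 2)) {-ln q..-ln p}"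
    by (rule lin_integral) (use pq in auto)
  have "?c0 * (q - p) + ?c1 * (q^2 - p^2) / 2 = (q - p) * ff t m"
    by (simp add: m_def power2_eq_square algebra_simps)
  with L have L': "((\<lambda>x. (?c0 + ?c1 * exp (-x)) * exp (-x)) has_integral ((q - p) * ff t m)) {-ln q..-ln p}" by simp
  have "(q - p) * ff t m \<le> integral {-ln q..-ln p} (hh t)"
  proof (rule has_integral_le[OF L' integrable_integral[OF int]])
    fix x assume x: "x \<in> {-ln q..-ln p}"
    have ux: "exp (-x) \<le> exp 1" using xu[OF x] pq e1 by linarith
    have "ff t m + ff1 t m * (exp (-x) - m) \<le> ff t (exp (-x))"
      by (rule ff_tangent) (use t m xu[OF x] pq ux in auto)
    then have "(ff t m + ff1 t m * (exp (-x) - m)) * exp (-x) \<le> ff t (exp (-x)) * exp (-x)"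
      by (intro mult_right_mono) auto
    then show "(?c0 + ?c1 * exp (-x)) * exp (-x) \<le> hh t x"
      by (simp add: hh_ff algebra_simps)
  qed
  then show "(q - p) * ff t ((p+q)/2) \<le> integral {-ln q..-ln p} (hh t)" by (simp add: m_def)
  define s where "s = (ff t q - ff t p) / (q - p)"
  let ?d0 = "ff t p - s * p" and ?d1 = "s"
  have U: "((\<lambda>x. (?d0 + ?d1 * exp (-x)) * exp (-x)) has_integral (?d0 * (q - p) + ?d1 * (q^2 - p^2) / 2)) {-ln q..-ln p}"
    by (rule lin_integral) (use pq in auto)
  have hs: "s * (q - p) = ff t q - ff t p" using pq by (simp add: s_def)
  have "?d0 * (q - p) + ?d1 * (q^2 - p^2) / 2 = (q - p) * ff t p + (s * (q - p)) * (q - p) / 2"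
    by (simp add: field_simps power2_eq_square)
  also have "\<dots> = (q - p) * (ff t p + ff t q) / 2" unfolding hs by (simp add: field_simps)
  finally have "?d0 * (q - p) + ?d1 * (q^2 - p^2) / 2 = (q - p) * (ff t p + ff t q) / 2" .
  with U have U': "((\<lambda>x. (?d0 + ?d1 * exp (-x)) * exp (-x)) has_integral ((q - p) * (ff t p + ff t q) / 2)) {-ln q..-ln p}" by simp
  show "integral {-ln q..-ln p} (hh t) \<le> (q - p) * (ff t p + ff t q) / 2"
  proof (rule has_integral_le[OF integrable_integral[OF int] U'])
    fix x assume x: "x \<in> {-ln q..-ln p}"
    have "ff t (exp (-x)) \<le> ff t p + (ff t q - ff t p) / (q - p) * (exp (-x) - p)"
      by (rule ff_chord) (use t xu[OF x] pq e1 in \<open>auto intro: order_trans[OF _ e1]\<close>)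
    then have "ff t (exp (-x)) * exp (-x) \<le> (ff t p + s * (exp (-x) - p)) * exp (-x)"
      by (intro mult_right_mono) (auto simp: s_def)
    then show "hh t x \<le> (?d0 + ?d1 * exp (-x)) * exp (-x)"
      by (simp add: hh_ff algebra_simps)
  qed
qed

lemma decomp_gen:
  assumes t: "t > 0" and k: "k \<ge> 1" and m: "1 \<le> m" "m \<le> k"
  shows "integral {-ln (real m / real k)..ln (real k)} (hh t)
       = (\<Sum>j\<in>{1..<m}. integral {-ln (real (Suc j) / real k)..-ln (real j / real k)} (hh t))"
  using m
proof (induction m rule: dec_induct)
  case base
  have "-ln (1 / real k) = ln (real k)" using k by (simp add: ln_div)
  then show ?case by simp
next
  case (step m)
  have km: "0 < real m" "real m < real (Suc m)" "real (Suc m) \<le> real k" using step by auto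
  have a: "-ln (real (Suc m) / real k) \<le> -ln (real m / real k)"
    using km k by (simp add: divide_right_mono)
  have b: "-ln (real m / real k) \<le> ln (real k)"
  proof -
    have "real m / real k \<ge> 1 / real k" using km k by (simp add: divide_right_mono)
    then have "ln (real m / real k) \<ge> ln (1 / real k)" using km k by simp
    then show ?thesis using k by (simp add: ln_div)
  qed
  have nn: "0 \<le> -ln (real (Suc m) / real k)" using km k by simp
  have "integral {-ln (real (Suc m) / real k)..-ln (real m / real k)} (hh t) + integral {-ln (real m / real k)..ln (real k)} (hh t)
      = integral {-ln (real (Suc m) / real k)..ln (real k)} (hh t)"
    by (rule Henstock_Kurzweil_Integration.integral_combine[OF a b]) (intro integrable_continuous_real hh_cont t nn)
  then show ?case using step by (simp add: add.commute)
qed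

lemma decomp:
  assumes t: "t > 0" and k: "k \<ge> 1"
  shows "integral {0..ln (real k)} (hh t)
       = (\<Sum>j\<in>{1..<k}. integral {-ln (real (Suc j) / real k)..-ln (real j / real k)} (hh t))"
  using decomp_gen[OF t k k order.refl] k by simp

lemma hh_nonneg: "t > 0 \<Longrightarrow> 0 \<le> x \<Longrightarrow> 0 \<le> hh t x"
  unfolding hh_def by simp

lemma mu0_split:
  assumes t: "t > 0" and L: "0 \<le> L"
  shows "mu0 t = integral {0..L} (hh t) + integral\<^sup>L lborel (\<lambda>x. indicator {L..} x * hh t x)"
proof -
  have I0: "integrable lborel (\<lambda>x. indicator {0..} x * hh t x)" using hh_integrable[OF t] .
  have meas: "hh t \<in> borel_measurable borel" by (rule hh_meas)
  have bnd: "integrable lborel (\<lambda>x. indicator A x * hh t x)" if "A \<subseteq> {0..}" "A \<in> sets borel" for A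
  proof (rule Bochner_Integration.integrable_bound[OF I0])
    show "(\<lambda>x. indicator A x * hh t x) \<in> borel_measurable lborel" using meas that by measurable
    show "AE x in lborel. norm (indicator A x * hh t x) \<le> norm (indicator {0..} x * hh t x)"
      using that by (intro AE_I2) (auto split: split_indicator)
  qed
  have I1: "integrable lborel (\<lambda>x. indicator {0..<L} x * hh t x)" by (rule bnd) auto
  have I2: "integrable lborel (\<lambda>x. indicator {L..} x * hh t x)" by (rule bnd) (use L in auto)
  have "mu0 t = integral\<^sup>L lborel (\<lambda>x. indicator {0..<L} x * hh t x + indicator {L..} x * hh t x)"
    unfolding mu0_eq using L by (intro Bochner_Integration.integral_cong) (auto split: split_indicator)
  also have "\<dots> = integral\<^sup>L lborel (\<lambda>x. indicator {0..<L} x * hh t x) + integral\<^sup>L lborel (\<lambda>x. indicator {L..} x * hh t x)"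
    by (rule Bochner_Integration.integral_add[OF I1 I2])
  also have "integral\<^sup>L lborel (\<lambda>x. indicator {0..<L} x * hh t x) = integral\<^sup>L lborel (\<lambda>x. indicator {0..L} x * hh t x)"
  proof (rule integral_cong_AE)
    show "AE x in lborel. indicator {0..<L} x * hh t x = indicator {0..L} x * hh t x"
      using AE_lborel_singleton[of L] by eventually_elim (auto split: split_indicator)
    show "(\<lambda>x. indicator {0..<L} x * hh t x) \<in> borel_measurable lborel" using meas by measurable
    show "(\<lambda>x. indicator {0..L} x * hh t x) \<in> borel_measurable lborel" using meas by measurable
  qed
  also have "integral\<^sup>L lborel (\<lambda>x. indicator {0..L} x * hh t x) = (LINT x:{0..L}|lborel. hh t x)"
    unfolding set_lebesgue_integral_def by simp
  also have "\<dots> = integral {0..L} (hh t)"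
    by (rule set_borel_integral_eq_integral(2)) (intro borel_integrable_atLeastAtMost' hh_cont t order.refl)
  finally show ?thesis .
qed

lemma exp_tail: fixes L :: real shows "has_bochner_integral lborel (\<lambda>x. indicator {L..} x * exp (-x)) (exp (-L))"
proof -
  have "has_bochner_integral lborel (\<lambda>x. indicator {L..} x * exp (-x)) (0 - (- exp (-L)))"
    by (rule has_bochner_Ici[where \<Phi>="\<lambda>x. - exp (-x)"])
       (auto intro!: derivative_eq_intros, real_asymp)
  then show ?thesis by simp
qed

lemma lin_tail: fixes L :: real shows "has_bochner_integral lborel (\<lambda>x. indicator {L..} x * ((x - L) * exp (-x))) (exp (-L))"
proof -
  have "has_bochner_integral lborel (\<lambda>x. indicator {L..} x * ((x - L) * exp (-x))) (0 - (- (L - L + 1) * exp (-L)))"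
    by (rule has_bochner_Ici[where \<Phi>="\<lambda>x. - (x - L + 1) * exp (-x)"])
       (auto intro!: derivative_eq_intros simp: algebra_simps, real_asymp)
  then show ?thesis by simp
qed

lemma tail_bounds:
  assumes t: "t > 0" and L: "0 \<le> L"
  shows "ln (1 + L/t) * exp (-L) \<le> integral\<^sup>L lborel (\<lambda>x. indicator {L..} x * hh t x)"
    "integral\<^sup>L lborel (\<lambda>x. indicator {L..} x * hh t x) \<le> (ln (1 + L/t) + 1/t) * exp (-L)"
proof -
  have I0: "integrable lborel (\<lambda>x. indicator {0..} x * hh t x)" using hh_integrable[OF t] .
  have I2: "integrable lborel (\<lambda>x. indicator {L..} x * hh t x)"
  proof (rule Bochner_Integration.integrable_bound[OF I0])
    show "(\<lambda>x. indicator {L..} x * hh t x) \<in> borel_measurable lborel" using hh_meas by measurable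
    show "AE x in lborel. norm (indicator {L..} x * hh t x) \<le> norm (indicator {0..} x * hh t x)"
      using L by (intro AE_I2) (auto split: split_indicator)
  qed
  have E: "has_bochner_integral lborel (\<lambda>x. ln (1 + L/t) * (indicator {L..} x * exp (-x))) (ln (1 + L/t) * exp (-L))"
    by (intro has_bochner_integral_mult_right exp_tail)
  show "ln (1 + L/t) * exp (-L) \<le> integral\<^sup>L lborel (\<lambda>x. indicator {L..} x * hh t x)"
    unfolding has_bochner_integral_integral_eq[OF E, symmetric]
  proof (rule integral_mono[OF _ I2])
    show "integrable lborel (\<lambda>x. ln (1 + L/t) * (indicator {L..} x * exp (-x)))" using E by (auto simp: has_bochner_integral_iff)
    fix x :: real
    show "ln (1 + L/t) * (indicator {L..} x * exp (-x)) \<le> indicator {L..} x * hh t x"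
    proof (cases "L \<le> x")
      case True
      have "0 \<le> L / t" using L t by simp
      moreover have "L/t \<le> x/t" using True t by (simp add: divide_right_mono)
      ultimately have "ln (1 + L/t) \<le> ln (1 + x/t)" by simp
      then show ?thesis using True by (simp add: hh_def mult_right_mono)
    qed simp
  qed
  have E2: "has_bochner_integral lborel (\<lambda>x. ln (1 + L/t) * (indicator {L..} x * exp (-x)) + (1/t) * (indicator {L..} x * ((x - L) * exp (-x)))) (ln (1 + L/t) * exp (-L) + 1/t * exp (-L))"
    by (intro has_bochner_integral_add has_bochner_integral_mult_right exp_tail lin_tail)
  have "integral\<^sup>L lborel (\<lambda>x. indicator {L..} x * hh t x) \<le> ln (1 + L/t) * exp (-L) + 1/t * exp (-L)"
    unfolding has_bochner_integral_integral_eq[OF E2, symmetric]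
  proof (rule integral_mono[OF I2])
    show "integrable lborel (\<lambda>x. ln (1 + L/t) * (indicator {L..} x * exp (-x)) + (1/t) * (indicator {L..} x * ((x - L) * exp (-x))))"
      using E2 by (auto simp: has_bochner_integral_iff)
    fix x :: real
    show "indicator {L..} x * hh t x \<le> ln (1 + L/t) * (indicator {L..} x * exp (-x)) + (1/t) * (indicator {L..} x * ((x - L) * exp (-x)))"
    proof (cases "L \<le> x")
      case True
      have b0: "0 < 1 + L/t" using L t by (simp add: add_pos_nonneg)
      have a0: "0 < 1 + x/t" using L t True by (simp add: add_pos_nonneg)
      have "ln ((1 + x/t) / (1 + L/t)) \<le> (1 + x/t) / (1 + L/t) - 1"
        using a0 b0 by (intro ln_le_minus_one) simp
      also have "\<dots> = ((1 + x/t) - (1 + L/t)) / (1 + L/t)" unfolding diff_divide_distrib[of "1 + x/t"] using b0 by simp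
      also have "(1 + x/t) - (1 + L/t) = (x - L)/t" by (simp add: diff_divide_distrib)
      also have "((x - L)/t) / (1 + L/t) \<le> ((x - L)/t) / 1"
        using b0 True t L by (intro divide_left_mono) auto
      also have "\<dots> = (x - L)/t" by simp
      finally have "ln (1 + x/t) \<le> ln (1 + L/t) + (x - L)/t" using a0 b0 by (simp add: ln_div)
      then have "ln (1 + x/t) * exp (-x) \<le> (ln (1 + L/t) + (x - L)/t) * exp (-x)"
        by (intro mult_right_mono) auto
      then show ?thesis using True by (simp add: hh_def algebra_simps diff_divide_distrib)
    qed simp
  qed
  then show "integral\<^sup>L lborel (\<lambda>x. indicator {L..} x * hh t x) \<le> (ln (1 + L/t) + 1/t) * exp (-L)"
    by (simp add: algebra_simps)
qed

lemma exp1_ge2: "2 \<le> exp (1::real)"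
  using exp_ge_add_one_self[of 1] by simp

lemma T2_bounds:
  fixes t :: real and k :: nat
  assumes t: "t \<ge> 2" and k: "k \<ge> 2"
  defines "S \<equiv> (1 / real k) * (\<Sum>i=1..k. ln (1 - ln (real i / real k) / t))"
  shows "mu0 t - S \<le> ln (1 + ln (real k) / t) / (2 * real k) + 1 / (real k * t)"
    and "ln (1 + ln (2 * real k / 3) / t) / (2 * real k) \<le> mu0 t - S"
proof -
  define f where "f = ff t"
  define L where "L = ln (real k)"
  have k0: "real k > 0" "real k \<ge> 2" using k by auto
  have L0: "0 \<le> L" using k0 by (simp add: L_def)
  have eL: "exp (-L) = 1 / real k" using k0 by (simp add: L_def exp_minus inverse_eq_divide)
  define J where "J j = integral {-ln (real (Suc j) / real k)..-ln (real j / real k)} (hh t)" for j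
  define tail where "tail = integral\<^sup>L lborel (\<lambda>x. indicator {L..} x * hh t x)"
  define q where "q j = real (Suc j) / real k" for j
  define p where "p j = real j / real k" for j
  define M where "M j = f ((p j + q j) / 2)" for j
  have t0: "t > 0" using t by simp
  have f1k: "f (1 / real k) = ln (1 + L / t)"
    unfolding f_def ff_def L_def using k0 by (simp add: ln_div)
  have f1: "f 1 = 0" unfolding f_def ff_def by simp
  have mu: "mu0 t = (\<Sum>j\<in>{1..<k}. J j) + tail"
    unfolding tail_def J_def
    using mu0_split[OF t0 L0] decomp[OF t0, of k] k by (simp add: L_def)
  have Ssum: "(\<Sum>i=1..k. ln (1 - ln (real i / real k) / t)) = f (1 / real k) + (\<Sum>j\<in>{1..<k}. f (q j))"
  proof -
    have "(\<Sum>i=1..k. ln (1 - ln (real i / real k) / t)) = (\<Sum>i=1..k. f (real i / real k))"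
      by (simp add: f_def ff_def)
    also have "\<dots> = f (real 1 / real k) + (\<Sum>i=Suc 1..k. f (real i / real k))"
      using k by (subst sum.atLeast_Suc_atMost) auto
    also have "(\<Sum>i=Suc 1..k. f (real i / real k)) = (\<Sum>i=Suc 1..<Suc k. f (real i / real k))"
      by (simp add: atLeastLessThanSuc_atLeastAtMost)
    also have "\<dots> = (\<Sum>j=1..<k. f (q j))"
      unfolding sum.shift_bounds_Suc_ivl q_def by simp
    finally show ?thesis by simp
  qed
  have D: "mu0 t - S = (tail - f (1 / real k) / real k) + (\<Sum>j\<in>{1..<k}. J j - f (q j) / real k)"
  proof -
    have e1: "(\<Sum>j\<in>{1..<k}. J j - f (q j) / real k) = (\<Sum>j\<in>{1..<k}. J j) - (\<Sum>j\<in>{1..<k}. f (q j)) / real k"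
      by (simp add: sum_subtractf sum_divide_distrib)
    have e2: "S = f (1 / real k) / real k + (\<Sum>j\<in>{1..<k}. f (q j)) / real k"
      unfolding S_def Ssum by (simp add: distrib_left)
    show ?thesis using e1 e2 mu by linarith
  qed
  have pq: "0 < p j" "p j < q j" "q j \<le> 1" if "j \<in> {1..<k}" for j
    using that k0 by (auto simp: p_def q_def divide_strict_right_mono divide_le_eq)
  have Jb: "(q j - p j) * f ((p j + q j) / 2) \<le> J j" "J j \<le> (q j - p j) * (f (p j) + f (q j)) / 2"
    if "j \<in> {1..<k}" for j
    using piece_bounds[OF t pq[OF that]] unfolding J_def f_def p_def q_def by auto
  have qp: "q j - p j = 1 / real k" for j by (simp add: q_def p_def diff_divide_distrib[symmetric])
  have tl: "ln (1 + L/t) * (1 / real k) \<le> tail" "tail \<le> (ln (1 + L/t) + 1/t) * (1 / real k)"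
    using tail_bounds[OF t0 L0] unfolding tail_def eL by auto
  have "(\<Sum>j\<in>{1..<k}. J j - f (q j) / real k) \<le> (\<Sum>j\<in>{1..<k}. (f (p j) - f (q j)) / (2 * real k))"
  proof (rule sum_mono)
    fix j assume j: "j \<in> {1..<k}"
    show "J j - f (q j) / real k \<le> (f (p j) - f (q j)) / (2 * real k)"
    proof -
      have eq: "(f (p j) + f (q j)) / 2 / real k = f (q j) / real k + (f (p j) - f (q j)) / (2 * real k)"
        using k0 by (simp add: field_simps)
      have "J j \<le> (f (p j) + f (q j)) / 2 / real k" using Jb(2)[OF j] unfolding qp by simp
      then show ?thesis using eq by linarith
    qed
  qed
  also have "\<dots> = (\<Sum>j\<in>{1..<k}. f (real j / real k) - f (real (Suc j) / real k)) / (2 * real k)"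
    by (simp add: sum_divide_distrib p_def q_def)
  also have "(\<Sum>j\<in>{1..<k}. f (real j / real k) - f (real (Suc j) / real k)) = - (\<Sum>j=1..<k. f (real (Suc j) / real k) - f (real j / real k))"
    by (simp add: sum_negf[symmetric])
  also have "(\<Sum>j=1..<k. f (real (Suc j) / real k) - f (real j / real k)) = f (real k / real k) - f (real 1 / real k)"
    using k by (intro sum_Suc_diff'[where f="\<lambda>i. f (real i / real k)"]) auto
  finally have up: "(\<Sum>j\<in>{1..<k}. J j - f (q j) / real k) \<le> f (1 / real k) / (2 * real k)"
    using k0 f1 by simp
  have "ln (1 + L / t) \<le> L / t" using L0 t0 by (intro ln_add_one_self_le_self) simp
  then have "f (1 / real k) / (2 * real k) \<le> (L / t) / (2 * real k)"
    unfolding f1k using k0 by (intro divide_right_mono) auto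
  then show "mu0 t - S \<le> ln (1 + ln (real k) / t) / (2 * real k) + 1 / (real k * t)"
  proof -
    have e: "(ln (1 + L/t) + 1/t) * (1 / real k) = f (1 / real k) / real k + 1 / (real k * t)"
      using f1k k0 t0 by (simp add: field_simps)
    have e2: "f (1 / real k) / (2 * real k) = ln (1 + ln (real k) / t) / (2 * real k)"
      using f1k by (simp add: L_def)
    show ?thesis using D up tl(2) e e2 by linarith
  qed
  have mid: "f (q j) \<le> (M j + M (Suc j)) / 2" if "j \<in> {1..<k}" for j
  proof -
    have a: "(p j + q j) / 2 > 0" using pq[OF that] by simp
    have b: "(p (Suc j) + q (Suc j)) / 2 \<le> exp 1"
    proof -
      have "p (Suc j) \<le> 1" "q (Suc j) \<le> 2" using that k0 by (auto simp: p_def q_def divide_le_eq)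
      then have "(p (Suc j) + q (Suc j)) / 2 \<le> 2" by simp
      then show ?thesis using exp1_ge2 by linarith
    qed
    have c: "(p j + q j) / 2 \<le> (p (Suc j) + q (Suc j)) / 2"
      using k0 by (simp add: p_def q_def divide_right_mono)
    have "f (((p j + q j) / 2 + (p (Suc j) + q (Suc j)) / 2) / 2) \<le> (M j + M (Suc j)) / 2"
      unfolding M_def f_def by (rule ff_midconv[OF t a b c])
    moreover have "((p j + q j) / 2 + (p (Suc j) + q (Suc j)) / 2) / 2 = q j"
      using k0 by (simp add: p_def q_def field_simps)
    ultimately show ?thesis by simp
  qed
  have "(\<Sum>j\<in>{1..<k}. (M j - M (Suc j)) / (2 * real k)) \<le> (\<Sum>j\<in>{1..<k}. J j - f (q j) / real k)"
  proof (rule sum_mono)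
    fix j assume j: "j \<in> {1..<k}"
    show "(M j - M (Suc j)) / (2 * real k) \<le> J j - f (q j) / real k"
    proof -
      have a: "M j / real k \<le> J j" using Jb(1)[OF j] unfolding qp M_def by simp
      have b: "f (q j) / real k \<le> (M j + M (Suc j)) / 2 / real k" using divide_right_mono[OF mid[OF j], of "real k"] k0 by simp
      have eq: "(M j - M (Suc j)) / (2 * real k) = M j / real k - (M j + M (Suc j)) / 2 / real k"
        using k0 by (simp add: field_simps)
      show ?thesis using a b eq by linarith
    qed
  qed
  also have "(\<Sum>j\<in>{1..<k}. (M j - M (Suc j)) / (2 * real k)) = - (\<Sum>j=1..<k. M (Suc j) - M j) / (2 * real k)"
    by (simp add: sum_divide_distrib[symmetric] sum_negf[symmetric])
  also have "(\<Sum>j=1..<k. M (Suc j) - M j) = M k - M 1"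
    using k by (intro sum_Suc_diff') auto
  finally have lo1: "(M 1 - M k) / (2 * real k) \<le> (\<Sum>j\<in>{1..<k}. J j - f (q j) / real k)" by simp
  have Mk: "M k \<le> 0"
  proof -
    define u where "u = (p k + q k) / 2"
    have u1: "1 \<le> u" "u \<le> 2" using k0 by (auto simp: u_def p_def q_def field_simps)
    have "ln u \<le> ln 2" using u1 by simp
    also have "ln (2::real) < 1" using ln_2_less_1 .
    finally have "ln u < 1" .
    moreover have "0 \<le> ln u" using u1 by simp
    ultimately have "0 < 1 - ln u / t" "1 - ln u / t \<le> 1" using t by (auto simp: field_simps)
    then show ?thesis by (simp add: M_def f_def ff_def u_def[symmetric])
  qed
  have M1: "M 1 = ln (1 + ln (2 * real k / 3) / t)"
  proof -
    have "(p 1 + q 1) / 2 = 3 / (2 * real k)" using k0 by (simp add: p_def q_def field_simps)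
    moreover have "ln (3 / (real k * 2)) = - ln (2 * real k / 3)" using k0 by (simp add: ln_div)
    ultimately show ?thesis by (simp add: M_def f_def ff_def)
  qed
  show "ln (1 + ln (2 * real k / 3) / t) / (2 * real k) \<le> mu0 t - S"
  proof -
    have "M 1 / (2 * real k) \<le> (M 1 - M k) / (2 * real k)" using Mk k0 by (simp add: divide_right_mono)
    moreover have "0 \<le> tail - f (1 / real k) / real k" using tl(1) f1k by simp
    ultimately have "M 1 / (2 * real k) \<le> mu0 t - S" using D lo1 by linarith
    then show ?thesis using M1 by simp
  qed
qed

definition Kc :: "real \<Rightarrow> real \<Rightarrow> real" where
  "Kc \<rho> u = (if \<rho> = 0 then ln u else u powr \<rho> / \<rho>)"

lemma Kc_deriv: "0 < u \<Longrightarrow> (Kc \<rho> has_real_derivative u powr (\<rho> - 1)) (at u)"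
proof (cases "\<rho> = 0")
  case True
  assume u: "0 < u"
  have "(ln has_real_derivative 1 / u) (at u)" using u by (auto intro!: derivative_eq_intros)
  moreover have "1 / u = u powr (\<rho> - 1)" using u True by (simp add: powr_minus divide_inverse)
  ultimately show ?thesis using True by (simp add: Kc_def[abs_def])
next
  case False
  assume u: "0 < u"
  have "((\<lambda>u. u powr \<rho> / \<rho>) has_real_derivative (\<rho> * u powr (\<rho> - 1)) / \<rho>) (at u)"
    using u by (auto intro!: derivative_eq_intros)
  then show ?thesis using False by (simp add: Kc_def[abs_def])
qed

lemma K_fun_closed:
  assumes "1 \<le> lam"
  shows "K_fun \<rho> lam = Kc \<rho> lam - Kc \<rho> 1"
proof -
  have "((\<lambda>u. u powr (\<rho> - 1)) has_integral (Kc \<rho> lam - Kc \<rho> 1)) {1..lam}"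
  proof (rule fundamental_theorem_of_calculus[OF assms])
    fix x assume "x \<in> {1..lam}"
    then have "0 < x" by auto
    then show "(Kc \<rho> has_vector_derivative x powr (\<rho> - 1)) (at x within {1..lam})"
      using Kc_deriv[of x \<rho>] by (simp add: has_real_derivative_iff_has_vector_derivative[symmetric] has_field_derivative_at_within)
  qed
  then show ?thesis unfolding K_fun_def by (rule integral_unique)
qed

lemma Kc_cont: "0 < u \<Longrightarrow> isCont (Kc \<rho>) u"
  using Kc_deriv DERIV_isCont by blast

lemma K2_pos: "\<rho> \<le> 0 \<Longrightarrow> K_fun \<rho> 2 > 0"
proof -
  assume r: "\<rho> \<le> 0"
  have "K_fun \<rho> 2 = Kc \<rho> 2 - Kc \<rho> 1" by (rule K_fun_closed) simp
  moreover have "Kc \<rho> 2 - Kc \<rho> 1 > 0"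
  proof (cases "\<rho> = 0")
    case True then show ?thesis by (simp add: Kc_def)
  next
    case False
    then have "\<rho> < 0" using r by simp
    then have "2 powr \<rho> < 1" by (simp add: powr_less_one)
    then show ?thesis using \<open>\<rho> < 0\<close> by (simp add: Kc_def divide_neg_neg) (simp add: field_simps)
  qed
  ultimately show ?thesis by simp
qed

lemma ratio_arith:
  fixes bx bz K2 \<Delta> D \<epsilon> e :: real
  assumes bx: "bx \<noteq> 0" and K2: "K2 > 0"
    and main: "\<bar>bz * K2 - bx * \<Delta>\<bar> \<le> \<epsilon> * \<bar>bz\<bar> * K2 + \<epsilon> * \<bar>bx\<bar> * D"
    and c: "\<bar>\<Delta> / K2 - 1\<bar> < e / 2" and d: "D / K2 \<le> 2"
    and eps: "0 \<le> \<epsilon>" "\<epsilon> \<le> 1/2" "\<epsilon> \<le> e / 16" and e: "0 < e" "e \<le> 1"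
  shows "\<bar>bz / bx - 1\<bar> < e"
proof -
  define r where "r = bz / bx"
  define cc where "cc = \<Delta> / K2"
  define dd where "dd = D / K2"
  have byr: "bz = r * bx" using bx by (simp add: r_def)
  have Dc: "\<Delta> = cc * K2" using K2 by (simp add: cc_def)
  have Dd: "D = dd * K2" using K2 by (simp add: dd_def)
  have pos: "\<bar>bx\<bar> * K2 > 0" using bx K2 by simp
  have "bz * K2 - bx * \<Delta> = (bx * K2) * (r - cc)" unfolding byr Dc by (simp add: algebra_simps)
  then have "\<bar>bz * K2 - bx * \<Delta>\<bar> = (\<bar>bx\<bar> * K2) * \<bar>r - cc\<bar>"
    using K2 by (simp add: abs_mult)
  moreover have "\<epsilon> * \<bar>bz\<bar> * K2 + \<epsilon> * \<bar>bx\<bar> * D = (\<bar>bx\<bar> * K2) * (\<epsilon> * \<bar>r\<bar> + \<epsilon> * dd)"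
    unfolding byr Dd by (simp add: abs_mult algebra_simps)
  ultimately have "(\<bar>bx\<bar> * K2) * \<bar>r - cc\<bar> \<le> (\<bar>bx\<bar> * K2) * (\<epsilon> * \<bar>r\<bar> + \<epsilon> * dd)" using main by simp
  then have rc: "\<bar>r - cc\<bar> \<le> \<epsilon> * \<bar>r\<bar> + \<epsilon> * dd" using pos by (simp add: mult_le_cancel_left_pos)
  have c1: "\<bar>cc - 1\<bar> < e / 2" using c by (simp add: cc_def)
  have d2: "dd \<le> 2" using d by (simp add: dd_def)
  have "\<epsilon> * \<bar>r\<bar> \<le> \<bar>r\<bar> / 2" using mult_right_mono[OF eps(2) abs_ge_zero[of r]] by simp
  moreover have "\<epsilon> * dd \<le> 1"
  proof -
    have "\<epsilon> * dd \<le> (1/2) * 2"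
    proof (cases "dd \<ge> 0")
      case True then show ?thesis using eps d2 by (intro mult_mono) auto
    next
      case False then have "\<epsilon> * dd \<le> 0" using eps by (simp add: mult_nonneg_nonpos)
      then show ?thesis by simp
    qed
    then show ?thesis by simp
  qed
  ultimately have "\<bar>r\<bar> \<le> 5" using rc c1 e by linarith
  then have "\<epsilon> * \<bar>r\<bar> \<le> (e/16) * 5" using eps by (intro mult_mono) auto
  moreover have "\<epsilon> * dd \<le> (e/16) * 2"
  proof (cases "dd \<ge> 0")
    case True then show ?thesis using eps d2 e by (intro mult_mono) auto
  next
    case False then have "\<epsilon> * dd \<le> 0" using eps by (simp add: mult_nonneg_nonpos)
    then show ?thesis using e by simp
  qed
  ultimately have "\<bar>r - 1\<bar> < e" using rc c1 e by linarith
  then show ?thesis by (simp add: r_def)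
qed

lemma b_ratio:
  fixes x y :: "'a \<Rightarrow> real" and F :: "'a filter"
  assumes A2: "assm_A2 ell \<rho> b" and ellpos: "\<forall>\<^sub>F z in at_top. ell z > 0"
    and xlim: "filterlim x at_top F" and mu: "((\<lambda>n. y n / x n) \<longlongrightarrow> 1) F"
    and xy: "\<forall>\<^sub>F n in F. x n \<le> y n"
  shows "((\<lambda>n. b (y n) / b (x n)) \<longlongrightarrow> 1) F"
proof -
  have rho: "\<rho> \<le> 0" and bnz: "\<forall>\<^sub>F z in at_top. b z \<noteq> 0"
    and unif: "\<And>\<Lambda> \<epsilon>. \<Lambda> \<ge> 1 \<Longrightarrow> \<epsilon> > 0 \<Longrightarrow> \<forall>\<^sub>F z in at_top. \<forall>lam\<in>{1..\<Lambda>}.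
          \<bar>ln (ell (lam * z) / ell z) - b z * K_fun \<rho> lam\<bar> \<le> \<epsilon> * \<bar>b z * K_fun \<rho> lam\<bar>"
    using A2 unfolding assm_A2_def by auto
  define K2 where "K2 = K_fun \<rho> 2"
  have K2: "K2 > 0" using K2_pos[OF rho] by (simp add: K2_def)
  have K2nz: "K2 \<noteq> 0" using K2 by simp
  have K2c: "K2 = Kc \<rho> 2 - Kc \<rho> 1" unfolding K2_def by (rule K_fun_closed) simp
  define m where "m n = y n / x n" for n
  have ylim: "filterlim y at_top F" by (rule filterlim_at_top_mono[OF xlim xy])
  have xpos: "\<forall>\<^sub>F n in F. x n > 0" using xlim by (simp add: filterlim_at_top_dense)
  have m1: "\<forall>\<^sub>F n in F. 1 \<le> m n" using xpos xy by eventually_elim (simp add: m_def)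
  have m2: "\<forall>\<^sub>F n in F. m n < 2"
    using mu unfolding m_def[symmetric] by (rule order_tendstoD) simp
  have mlim: "(m \<longlongrightarrow> 1) F" using mu by (simp add: m_def[abs_def])
  have Kcm: "((\<lambda>n. Kc \<rho> (m n)) \<longlongrightarrow> Kc \<rho> 1) F"
    by (rule isCont_tendsto_compose[OF Kc_cont mlim]) simp
  have Kcm2: "((\<lambda>n. Kc \<rho> (2 * m n)) \<longlongrightarrow> Kc \<rho> 2) F"
  proof -
    have "((\<lambda>n. 2 * m n) \<longlongrightarrow> 2 * 1) F" by (intro tendsto_intros mlim)
    then show ?thesis by (intro isCont_tendsto_compose[OF Kc_cont]) simp_all
  qed
  define c where "c n = (K_fun \<rho> (2 * m n) - K_fun \<rho> (m n)) / K2" for n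
  define d where "d n = (\<bar>K_fun \<rho> (2 * m n)\<bar> + \<bar>K_fun \<rho> (m n)\<bar>) / K2" for n
  have clim: "(c \<longlongrightarrow> 1) F"
  proof -
    have "((\<lambda>n. ((Kc \<rho> (2 * m n) - Kc \<rho> 1) - (Kc \<rho> (m n) - Kc \<rho> 1)) / K2) \<longlongrightarrow> ((Kc \<rho> 2 - Kc \<rho> 1) - (Kc \<rho> 1 - Kc \<rho> 1)) / K2) F"
      using K2nz by (intro tendsto_intros Kcm Kcm2) auto
    then have "((\<lambda>n. ((Kc \<rho> (2 * m n) - Kc \<rho> 1) - (Kc \<rho> (m n) - Kc \<rho> 1)) / K2) \<longlongrightarrow> 1) F"
      using K2nz by (simp add: K2c[symmetric])
    moreover have "\<forall>\<^sub>F n in F. ((Kc \<rho> (2 * m n) - Kc \<rho> 1) - (Kc \<rho> (m n) - Kc \<rho> 1)) / K2 = c n"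
      using m1 by eventually_elim (simp add: c_def K_fun_closed)
    ultimately show ?thesis by (rule Lim_transform_eventually)
  qed
  have dlim: "(d \<longlongrightarrow> 1) F"
  proof -
    have "((\<lambda>n. (\<bar>Kc \<rho> (2 * m n) - Kc \<rho> 1\<bar> + \<bar>Kc \<rho> (m n) - Kc \<rho> 1\<bar>) / K2) \<longlongrightarrow> (\<bar>Kc \<rho> 2 - Kc \<rho> 1\<bar> + \<bar>Kc \<rho> 1 - Kc \<rho> 1\<bar>) / K2) F"
      using K2nz by (intro tendsto_intros Kcm Kcm2) auto
    then have "((\<lambda>n. (\<bar>Kc \<rho> (2 * m n) - Kc \<rho> 1\<bar> + \<bar>Kc \<rho> (m n) - Kc \<rho> 1\<bar>) / K2) \<longlongrightarrow> 1) F"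
      using K2nz K2 by (simp add: K2c[symmetric])
    moreover have "\<forall>\<^sub>F n in F. (\<bar>Kc \<rho> (2 * m n) - Kc \<rho> 1\<bar> + \<bar>Kc \<rho> (m n) - Kc \<rho> 1\<bar>) / K2 = d n"
      using m1 by eventually_elim (simp add: d_def K_fun_closed)
    ultimately show ?thesis by (rule Lim_transform_eventually)
  qed
  have ev_at: "\<forall>\<^sub>F n in F. P (f n)" if "filterlim f at_top F" "\<forall>\<^sub>F z in at_top. P z" for f :: "'a \<Rightarrow> real" and P
    using that by (auto simp: filterlim_iff)
  have y2lim: "filterlim (\<lambda>n. 2 * y n) at_top F"
  proof (rule filterlim_at_top_mono[OF ylim])
    show "\<forall>\<^sub>F n in F. y n \<le> 2 * y n"
      using ev_at[OF ylim, of "\<lambda>z. 0 \<le> z"] by (auto simp: eventually_ge_at_top elim: eventually_mono)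
  qed
  show ?thesis
    unfolding tendsto_iff dist_real_def
  proof (intro allI impI)
    fix e :: real assume e: "e > 0"
    define e' where "e' = min e 1"
    define \<epsilon> where "\<epsilon> = min (1/2) (e' / 16)"
    have e': "0 < e'" "e' \<le> 1" "e' \<le> e" using e by (auto simp: e'_def)
    have eps: "0 < \<epsilon>" "\<epsilon> \<le> 1/2" "\<epsilon> \<le> e'/16" using e' by (auto simp: \<epsilon>_def)
    have U: "\<forall>\<^sub>F z in at_top. \<forall>lam\<in>{1..4}.
          \<bar>ln (ell (lam * z) / ell z) - b z * K_fun \<rho> lam\<bar> \<le> \<epsilon> * \<bar>b z * K_fun \<rho> lam\<bar>"
      using unif[of 4 \<epsilon>] eps by simp
    have E1: "\<forall>\<^sub>F n in F. \<bar>c n - 1\<bar> < e'/2"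
      using tendsto_iff[THEN iffD1, OF clim, rule_format, of "e'/2"] e' by (simp add: dist_real_def)
    have E2: "\<forall>\<^sub>F n in F. d n < 2" using dlim by (rule order_tendstoD) simp
    show "\<forall>\<^sub>F n in F. \<bar>b (y n) / b (x n) - 1\<bar> < e"
      using E1 E2 m1 m2 xpos ev_at[OF xlim U] ev_at[OF ylim U] ev_at[OF xlim ellpos] ev_at[OF ylim ellpos]
        ev_at[OF y2lim ellpos] ev_at[OF xlim bnz]
    proof eventually_elim
      case (elim n)
      define bx where "bx = b (x n)"
      define bz where "bz = b (y n)"
      have yx: "y n = m n * x n" using elim by (simp add: m_def)
      have A: "\<bar>ln (ell (2 * m n * x n) / ell (x n)) - bx * K_fun \<rho> (2 * m n)\<bar> \<le> \<epsilon> * \<bar>bx * K_fun \<rho> (2 * m n)\<bar>"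
        using elim(6) elim(3,4) unfolding bx_def by auto
      have B: "\<bar>ln (ell (m n * x n) / ell (x n)) - bx * K_fun \<rho> (m n)\<bar> \<le> \<epsilon> * \<bar>bx * K_fun \<rho> (m n)\<bar>"
        using elim(6) elim(3,4) unfolding bx_def by auto
      have C: "\<bar>ln (ell (2 * y n) / ell (y n)) - bz * K2\<bar> \<le> \<epsilon> * \<bar>bz * K2\<bar>"
        using elim(7) unfolding bz_def K2_def by auto
      have lnid: "ln (ell (2 * y n) / ell (y n)) = ln (ell (2 * m n * x n) / ell (x n)) - ln (ell (m n * x n) / ell (x n))"
        using elim(8,9,10) yx by (simp add: ln_div mult.assoc)
      have main: "\<bar>bz * K2 - bx * (K_fun \<rho> (2 * m n) - K_fun \<rho> (m n))\<bar>
          \<le> \<epsilon> * \<bar>bz\<bar> * K2 + \<epsilon> * \<bar>bx\<bar> * (\<bar>K_fun \<rho> (2 * m n)\<bar> + \<bar>K_fun \<rho> (m n)\<bar>)"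
      proof -
        have "\<bar>bz * K2 - bx * (K_fun \<rho> (2 * m n) - K_fun \<rho> (m n))\<bar>
           \<le> \<epsilon> * \<bar>bz * K2\<bar> + \<epsilon> * \<bar>bx * K_fun \<rho> (2 * m n)\<bar> + \<epsilon> * \<bar>bx * K_fun \<rho> (m n)\<bar>"
          using A B C lnid by (simp add: algebra_simps) linarith
        also have "\<dots> = \<epsilon> * \<bar>bz\<bar> * K2 + \<epsilon> * \<bar>bx\<bar> * (\<bar>K_fun \<rho> (2 * m n)\<bar> + \<bar>K_fun \<rho> (m n)\<bar>)"
          using K2 by (simp add: abs_mult algebra_simps)
        finally show ?thesis .
      qed
      have "\<bar>bz / bx - 1\<bar> < e'"
        by (rule ratio_arith[OF _ K2 main])
           (use elim(1,2) eps e' in \<open>auto simp: bx_def c_def d_def elim(11)\<close>)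
      then show ?case using e' by (simp add: bx_def bz_def)
    qed
  qed
qed

lemma basic_asymp:
  fixes k :: "nat \<Rightarrow> nat"
  assumes k_range: "\<forall>n\<ge>2. 1 \<le> k n \<and> k n < n"
    and k_inf: "filterlim k at_top sequentially"
    and k_log: "(\<lambda>n. ln (real (k n)) / ln (real n)) \<longlonglongrightarrow> 0"
  shows "filterlim (\<lambda>n. ln (real n / real (k n))) at_top sequentially"
    and "((\<lambda>n. ln (real n / real (k n)) / ln (real n)) \<longlongrightarrow> 1) sequentially"
    and "((\<lambda>n. ln (real (k n)) / ln (real n / real (k n))) \<longlongrightarrow> 0) sequentially"
    and "filterlim (\<lambda>n. ln (real (k n))) at_top sequentially"
    and "((\<lambda>n. ln (real (k n)) / real (k n)) \<longlongrightarrow> 0) sequentially"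
    and "\<forall>\<^sub>F n in sequentially. 2 \<le> k n \<and> k n < n \<and> 0 < ln (real (k n))
           \<and> ln (real n / real (k n)) = ln (real n) - ln (real (k n)) \<and> 0 < ln (real n)"
proof -
  have rk: "filterlim (\<lambda>n. real (k n)) at_top sequentially"
    by (rule filterlim_compose[OF filterlim_real_sequentially k_inf])
  have lnn: "filterlim (\<lambda>n. ln (real n)) at_top sequentially"
    by (rule filterlim_compose[OF ln_at_top filterlim_real_sequentially])
  show LL: "filterlim (\<lambda>n. ln (real (k n))) at_top sequentially"
    by (rule filterlim_compose[OF ln_at_top rk])
  have k2: "\<forall>\<^sub>F n in sequentially. 2 \<le> k n" using k_inf by (simp add: filterlim_at_top)
  have ev2: "\<forall>\<^sub>F n in sequentially. 2 \<le> n" by (simp add: eventually_ge_at_top)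
  show ev: "\<forall>\<^sub>F n in sequentially. 2 \<le> k n \<and> k n < n \<and> 0 < ln (real (k n))
           \<and> ln (real n / real (k n)) = ln (real n) - ln (real (k n)) \<and> 0 < ln (real n)"
    using k2 ev2
  proof eventually_elim
    case (elim n)
    then have "k n < n" using k_range by auto
    moreover have "0 < ln (real (k n))" using elim by simp
    moreover have "0 < ln (real n)" using elim by simp
    ultimately show ?case using elim by (simp add: ln_div)
  qed
  have ratio_eq: "\<forall>\<^sub>F n in sequentially. ln (real n / real (k n)) / ln (real n) = 1 - ln (real (k n)) / ln (real n)"
    using ev by eventually_elim (simp add: diff_divide_distrib)
  have "((\<lambda>n. 1 - ln (real (k n)) / ln (real n)) \<longlongrightarrow> 1 - 0) sequentially"
    by (intro tendsto_intros k_log)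
  then show R: "((\<lambda>n. ln (real n / real (k n)) / ln (real n)) \<longlongrightarrow> 1) sequentially"
    using ratio_eq by (simp add: tendsto_cong)
  have "filterlim (\<lambda>n. ln (real n / real (k n)) / ln (real n) * ln (real n)) at_top sequentially"
    by (rule filterlim_tendsto_pos_mult_at_top[OF R _ lnn]) simp
  moreover have "\<forall>\<^sub>F n in sequentially. ln (real n / real (k n)) / ln (real n) * ln (real n) = ln (real n / real (k n))"
    using ev by eventually_elim simp
  ultimately show "filterlim (\<lambda>n. ln (real n / real (k n))) at_top sequentially"
    by (simp add: filterlim_cong)
  have "((\<lambda>n. (ln (real (k n)) / ln (real n)) / (ln (real n / real (k n)) / ln (real n))) \<longlongrightarrow> 0 / 1) sequentially"
    by (intro tendsto_intros k_log R) simp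
  then have "((\<lambda>n. (ln (real (k n)) / ln (real n)) / (ln (real n / real (k n)) / ln (real n))) \<longlongrightarrow> 0) sequentially"
    by simp
  moreover have "\<forall>\<^sub>F n in sequentially. (ln (real (k n)) / ln (real n)) / (ln (real n / real (k n)) / ln (real n)) = ln (real (k n)) / ln (real n / real (k n))"
    using ev by eventually_elim simp
  ultimately show "((\<lambda>n. ln (real (k n)) / ln (real n / real (k n))) \<longlongrightarrow> 0) sequentially"
    by (rule Lim_transform_eventually)
  have "((\<lambda>x::real. ln x / x) \<longlongrightarrow> 0) at_top" by real_asymp
  then show "((\<lambda>n. ln (real (k n)) / real (k n)) \<longlongrightarrow> 0) sequentially"
    by (rule filterlim_compose[OF _ rk])
qed

lemma mu0_t:
  assumes t: "t > 2"
  shows "-1 \<le> t * (t * mu0 t - 1)" "t * (t * mu0 t - 1) \<le> -1 + 2 / t" "mu0 t > 0"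
proof -
  have t0: "t > 0" using t by simp
  note b = mu0_bounds[OF t0]
  have "t^2 * (1/t - 1/t^2) \<le> t^2 * mu0 t" using b(1) by (intro mult_left_mono) auto
  moreover have "t^2 * (1/t - 1/t^2) = t - 1" using t0 by (simp add: field_simps power2_eq_square)
  ultimately have l: "t - 1 \<le> t^2 * mu0 t" by simp
  have "t^2 * mu0 t \<le> t^2 * (1/t - 1/t^2 + 2/t^3)" using b(2) by (intro mult_left_mono) auto
  moreover have "t^2 * (1/t - 1/t^2 + 2/t^3) = t - 1 + 2/t" using t0 by (simp add: field_simps power2_eq_square power3_eq_cube)
  ultimately have u: "t^2 * mu0 t \<le> t - 1 + 2/t" by simp
  have eq: "t * (t * mu0 t - 1) = t^2 * mu0 t - t" by (simp add: algebra_simps power2_eq_square)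
  show "-1 \<le> t * (t * mu0 t - 1)" using l eq by simp
  show "t * (t * mu0 t - 1) \<le> -1 + 2 / t" using u eq by simp
  have "0 < 1/t - 1/t^2"
  proof -
    have "1/t^2 < 1/t" using t by (simp add: power2_eq_square divide_strict_left_mono)
    then show ?thesis by simp
  qed
  then show "mu0 t > 0" using b(1) by simp
qed

lemma up_arith:
  fixes k t L D :: real
  assumes "k > 0" "t > 0" "L > 0" "D \<le> ln (1 + L/t) / (2*k) + 1 / (k * t)"
  shows "D * (2 * k * t / L) \<le> 1 + 2 / L"
proof -
  have "ln (1 + L/t) \<le> L/t" using assms by (intro ln_add_one_self_le_self) simp
  then have "ln (1 + L/t) / (2*k) \<le> (L/t) / (2*k)" using assms by (intro divide_right_mono) auto
  then have "D \<le> (L/t)/(2*k) + 1/(k*t)" using assms by linarith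
  then have "D * (2 * k * t / L) \<le> ((L/t)/(2*k) + 1/(k*t)) * (2 * k * t / L)"
    using assms by (intro mult_right_mono) auto
  also have "\<dots> = 1 + 2 / L" using assms by (simp add: field_simps)
  finally show ?thesis .
qed

lemma lo_arith:
  fixes k t L D l2 :: real
  assumes "k > 0" "t > 0" "L > 0" "l2 \<ge> 0" "ln (1 + l2/t) / (2*k) \<le> D"
  shows "(l2 / L) * (1 - (l2/t)/2) \<le> D * (2 * k * t / L)"
proof -
  have "l2/t - (l2/t)^2/2 \<le> ln (1 + l2/t)" using assms by (intro ln_lower2) simp
  then have "(l2/t - (l2/t)^2/2) / (2*k) \<le> D" using assms by (meson divide_right_mono order_trans less_imp_le mult_pos_pos zero_less_numeral)
  then have "(l2/t - (l2/t)^2/2) / (2*k) * (2 * k * t / L) \<le> D * (2 * k * t / L)"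
    using assms by (intro mult_right_mono) auto
  moreover have "(l2/t - (l2/t)^2/2) / (2*k) * (2 * k * t / L) = (l2 / L) * (1 - (l2/t)/2)"
    using assms by (simp add: field_simps power2_eq_square)
  ultimately show ?thesis by linarith
qed

lemma asymp_main:
  fixes k :: "nat \<Rightarrow> nat"
  assumes k_range: "\<forall>n\<ge>2. 1 \<le> k n \<and> k n < n"
    and k_inf: "filterlim k at_top sequentially"
    and k_log: "(\<lambda>n. ln (real (k n)) / ln (real n)) \<longlonglongrightarrow> 0"
  shows "((\<lambda>n. ln (real n / real (k n)) * a_n T3 n (k n)) \<longlongrightarrow> -1) sequentially"
    and "((\<lambda>n. 2 * real (k n) / ln (real (k n)) * a_n T2 n (k n)) \<longlongrightarrow> 1) sequentially"
    and "\<forall>\<^sub>F n in sequentially. a_n T1 n (k n) = 0"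
proof -
  define tt where "tt n = ln (real n / real (k n))" for n
  define LL where "LL n = ln (real (k n))" for n
  define kk where "kk n = real (k n)" for n
  note ba = basic_asymp[OF k_range k_inf k_log]
  have ttlim: "filterlim tt at_top sequentially" using ba(1) by (simp add: tt_def[abs_def])
  have LLlim: "filterlim LL at_top sequentially" using ba(4) by (simp add: LL_def[abs_def])
  have LLt: "((\<lambda>n. LL n / tt n) \<longlongrightarrow> 0) sequentially" using ba(3) by (simp add: tt_def LL_def)
  have LLk: "((\<lambda>n. LL n / kk n) \<longlongrightarrow> 0) sequentially" using ba(5) by (simp add: kk_def LL_def)
  have ev: "\<forall>\<^sub>F n in sequentially. 2 \<le> k n \<and> 0 < LL n \<and> 2 < tt n"
    using ba(6) ttlim[unfolded filterlim_at_top_dense, rule_format, of 2]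
    by eventually_elim (auto simp: LL_def)
  have inf_tt: "filterlim tt at_infinity sequentially" using ttlim by (rule filterlim_at_top_imp_at_infinity)
  have inf_LL: "filterlim LL at_infinity sequentially" using LLlim by (rule filterlim_at_top_imp_at_infinity)
  define X where "X n = tt n * (tt n * mu0 (tt n) - 1)" for n
  have Xlim: "(X \<longlongrightarrow> -1) sequentially"
  proof (rule tendsto_sandwich[where f="\<lambda>n. -1" and h="\<lambda>n. -1 + 2 / tt n"])
    show "\<forall>\<^sub>F n in sequentially. -1 \<le> X n" using ev by eventually_elim (simp add: X_def mu0_t)
    show "\<forall>\<^sub>F n in sequentially. X n \<le> -1 + 2 / tt n" using ev by eventually_elim (metis X_def mu0_t(2))
    have "((\<lambda>n. 2 / tt n) \<longlongrightarrow> 0) sequentially" by (rule tendsto_divide_0[OF tendsto_const inf_tt])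
    then have "((\<lambda>n. -1 + 2 / tt n) \<longlongrightarrow> -1 + 0) sequentially" by (intro tendsto_add tendsto_const)
    then show "((\<lambda>n. -1 + 2 / tt n) \<longlongrightarrow> -1) sequentially" by simp
  qed simp
  show "((\<lambda>n. ln (real n / real (k n)) * a_n T3 n (k n)) \<longlongrightarrow> -1) sequentially"
  proof -
    have "\<And>n. ln (real n / real (k n)) * a_n T3 n (k n) = X n"
      by (simp add: a_n_def T3_def X_def tt_def T1_def algebra_simps)
    then show ?thesis using Xlim by simp
  qed
  show "\<forall>\<^sub>F n in sequentially. a_n T1 n (k n) = 0"
    using ev by eventually_elim (auto simp: a_n_def T1_def tt_def[symmetric] dest!: mu0_t(3))
  define M where "M n = tt n * mu0 (tt n)" for n
  have Mlim: "(M \<longlongrightarrow> 1) sequentially"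
  proof -
    have "((\<lambda>n. 1 + X n / tt n) \<longlongrightarrow> 1 + 0) sequentially"
      by (intro tendsto_add tendsto_const tendsto_divide_0[OF Xlim inf_tt])
    moreover have "\<forall>\<^sub>F n in sequentially. 1 + X n / tt n = M n"
      using ev by eventually_elim (simp add: X_def M_def)
    ultimately show ?thesis by (simp add: Lim_transform_eventually)
  qed
  define D where "D n = mu0 (tt n) - T2 n (k n)" for n
  define Q where "Q n = D n * (2 * kk n * tt n / LL n)" for n
  define l2 where "l2 n = ln (2 * kk n / 3)" for n
  have T2eq: "T2 n (k n) = (1 / real (k n)) * (\<Sum>i=1..k n. ln (1 - ln (real i / real (k n)) / tt n))" for n
    by (simp add: T2_def tt_def)
  have Qb: "\<forall>\<^sub>F n in sequentially. (l2 n / LL n) * (1 - (l2 n / tt n)/2) \<le> Q n \<and> Q n \<le> 1 + 2 / LL n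
      \<and> 0 \<le> l2 n \<and> l2 n \<le> LL n \<and> l2 n = ln 2 - ln 3 + LL n"
    using ev
  proof eventually_elim
    case (elim n)
    have t2: "tt n \<ge> 2" using elim by simp
    have k2: "k n \<ge> 2" using elim by simp
    note TB = T2_bounds[OF t2 k2, folded T2eq D_def]
    have kp: "kk n > 0" "kk n \<ge> 2" using k2 by (auto simp: kk_def)
    have l2a: "0 \<le> l2 n" using kp by (simp add: l2_def)
    have l2b: "l2 n \<le> LL n" using kp by (simp add: l2_def LL_def kk_def)
    have l2c: "l2 n = ln 2 - ln 3 + LL n" using kp by (simp add: l2_def LL_def kk_def ln_div ln_mult)
    have "Q n \<le> 1 + 2 / LL n"
      unfolding Q_def by (rule up_arith) (use kp elim TB(1) in \<open>auto simp: kk_def LL_def\<close>)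
    moreover have "(l2 n / LL n) * (1 - (l2 n / tt n)/2) \<le> Q n"
      unfolding Q_def by (rule lo_arith) (use kp elim TB(2) l2a in \<open>auto simp: kk_def LL_def l2_def\<close>)
    ultimately show ?case using l2a l2b l2c by simp
  qed
  have l2L: "((\<lambda>n. l2 n / LL n) \<longlongrightarrow> 1) sequentially"
  proof -
    have "((\<lambda>n. 1 + (ln 2 - ln 3) / LL n) \<longlongrightarrow> 1 + 0) sequentially"
      by (intro tendsto_add tendsto_const tendsto_divide_0[OF tendsto_const inf_LL])
    moreover have "\<forall>\<^sub>F n in sequentially. 1 + (ln 2 - ln 3) / LL n = l2 n / LL n"
      using Qb ev by eventually_elim (simp add: field_simps)
    ultimately show ?thesis by (simp add: Lim_transform_eventually)
  qed
  have l2t: "((\<lambda>n. l2 n / tt n) \<longlongrightarrow> 0) sequentially"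
  proof (rule tendsto_sandwich[where f="\<lambda>n. 0" and h="\<lambda>n. LL n / tt n"])
    show "\<forall>\<^sub>F n in sequentially. 0 \<le> l2 n / tt n" using Qb ev by eventually_elim simp
    show "\<forall>\<^sub>F n in sequentially. l2 n / tt n \<le> LL n / tt n" using Qb ev by eventually_elim (simp add: divide_right_mono)
  qed (use LLt in simp_all)
  have Qlim: "(Q \<longlongrightarrow> 1) sequentially"
  proof (rule tendsto_sandwich[where f="\<lambda>n. (l2 n / LL n) * (1 - (l2 n / tt n)/2)" and h="\<lambda>n. 1 + 2 / LL n"])
    show "\<forall>\<^sub>F n in sequentially. (l2 n / LL n) * (1 - (l2 n / tt n)/2) \<le> Q n" using Qb by eventually_elim blast
    show "\<forall>\<^sub>F n in sequentially. Q n \<le> 1 + 2 / LL n" using Qb by eventually_elim blast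
    have "((\<lambda>n. (l2 n / LL n) * (1 - (l2 n / tt n)/2)) \<longlongrightarrow> 1 * (1 - 0/2)) sequentially"
      by (intro tendsto_intros l2L l2t) simp_all
    then show "((\<lambda>n. (l2 n / LL n) * (1 - (l2 n / tt n)/2)) \<longlongrightarrow> 1) sequentially" by simp
    have "((\<lambda>n. 1 + 2 / LL n) \<longlongrightarrow> 1 + 0) sequentially"
      by (intro tendsto_add tendsto_const tendsto_divide_0[OF tendsto_const inf_LL])
    then show "((\<lambda>n. 1 + 2 / LL n) \<longlongrightarrow> 1) sequentially" by simp
  qed
  define tD where "tD n = Q n * (LL n / kk n / 2)" for n
  have tDlim: "(tD \<longlongrightarrow> 0) sequentially"
  proof -
    have "(tD \<longlongrightarrow> 1 * (0 / 2)) sequentially"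
      unfolding tD_def[abs_def] by (intro tendsto_intros Qlim LLk) simp
    then show ?thesis by simp
  qed
  have tDeq: "\<forall>\<^sub>F n in sequentially. tD n = tt n * D n"
    using ev by eventually_elim (simp add: tD_def Q_def kk_def)
  have den: "((\<lambda>n. M n - tD n) \<longlongrightarrow> 1 - 0) sequentially" by (intro tendsto_intros Mlim tDlim)
  have denpos: "\<forall>\<^sub>F n in sequentially. M n - tD n > 0" using den by (rule order_tendstoD) simp
  have Rlim: "((\<lambda>n. Q n / (M n - tD n)) \<longlongrightarrow> 1 / (1 - 0)) sequentially"
    by (intro tendsto_intros Qlim den) simp
  show "((\<lambda>n. 2 * real (k n) / ln (real (k n)) * a_n T2 n (k n)) \<longlongrightarrow> 1) sequentially"
  proof -
    have "\<forall>\<^sub>F n in sequentially. Q n / (M n - tD n) = 2 * real (k n) / ln (real (k n)) * a_n T2 n (k n)"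
      using ev denpos tDeq
    proof eventually_elim
      case (elim n)
      have T2pos: "T2 n (k n) \<noteq> 0"
      proof
        assume "T2 n (k n) = 0"
        then have "M n - tD n = 0" using elim by (simp add: M_def D_def algebra_simps)
        then show False using elim by simp
      qed
      have "M n - tD n = tt n * T2 n (k n)" using elim by (simp add: M_def D_def algebra_simps)
      moreover have "a_n T2 n (k n) = D n / T2 n (k n)"
        using T2pos by (simp add: a_n_def D_def tt_def field_simps)
      ultimately show ?case using elim T2pos
        by (simp add: Q_def kk_def LL_def field_simps)
    qed
    then show ?thesis using Rlim by (simp add: Lim_transform_eventually)
  qed
qed

lemma sq_lt: fixes x B :: real shows "x * (x + 2 * B) < 0 \<Longrightarrow> (x + B)^2 < B^2"
  by (simp add: power2_eq_square algebra_simps)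
lemma sq_gt: fixes x B :: real shows "x * (x + 2 * B) > 0 \<Longrightarrow> B^2 < (x + B)^2"
  by (simp add: power2_eq_square algebra_simps)

lemma pos_mult_neg_imp: "(a::real) > 0 \<Longrightarrow> a * x < 0 \<Longrightarrow> x < 0" by (simp add: mult_less_0_iff)
lemma pos_mult_pos_imp: "(a::real) > 0 \<Longrightarrow> a * x > 0 \<Longrightarrow> x > 0" by (simp add: zero_less_mult_iff)

lemma lin1: "(c::real) < v \<Longrightarrow> -(c+\<theta>)/2 < u \<Longrightarrow> \<theta> < c \<Longrightarrow> 0 < u + v" by (simp add: field_simps)
lemma lin2: "(v::real) < c \<Longrightarrow> u < -(c+\<theta>)/2 \<Longrightarrow> c < \<theta> \<Longrightarrow> u + v < 0" by (simp add: field_simps)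

theorem theorem3:
  fixes F H ell b :: "real \<Rightarrow> real" and \<theta> \<rho> x0 lam :: real
    and k :: "nat \<Rightarrow> nat" and \<alpha> \<beta> :: ereal
  assumes cdf: "is_cdf F"
    and A1: "assm_A1 F \<theta> H x0 ell"
    and A2: "assm_A2 ell \<rho> b"
    and k_range: "\<forall>n\<ge>2. 1 \<le> k n \<and> k n < n"
    and k_inf: "filterlim k at_top sequentially"
    and k_log: "(\<lambda>n. ln (real (k n)) / ln (real n)) \<longlonglongrightarrow> 0"
    and k_bias: "(\<lambda>n. sqrt (real (k n)) * b (ln (real n / real (k n)))) \<longlonglongrightarrow> lam"
  shows "((\<forall>\<^sub>F x in at_top. b x \<le> 0)
          \<and> ((\<lambda>n. ereal (- 4 * b (ln (real n)) * real (k n) / ln (real (k n)))) \<longlongrightarrow> \<alpha>) sequentially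
          \<longrightarrow> (\<alpha> > ereal \<theta> \<longrightarrow> (\<forall>\<^sub>F n in sequentially.
                   AMSE T2 \<theta> b n (k n) < AMSE T1 \<theta> b n (k n)
                 \<and> AMSE T1 \<theta> b n (k n) < AMSE T3 \<theta> b n (k n)))
            \<and> (\<alpha> < ereal \<theta> \<longrightarrow> (\<forall>\<^sub>F n in sequentially.
                   AMSE T1 \<theta> b n (k n) < min (AMSE T2 \<theta> b n (k n)) (AMSE T3 \<theta> b n (k n)))))
       \<and> ((\<forall>\<^sub>F x in at_top. b x \<ge> 0)
          \<and> ((\<lambda>x. ereal (2 * x * b x)) \<longlongrightarrow> \<beta>) at_top
          \<longrightarrow> (\<beta> > ereal \<theta> \<longrightarrow> (\<forall>\<^sub>F n in sequentially.
                   AMSE T3 \<theta> b n (k n) < AMSE T1 \<theta> b n (k n)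
                 \<and> AMSE T1 \<theta> b n (k n) < AMSE T2 \<theta> b n (k n)))
            \<and> (\<beta> < ereal \<theta> \<longrightarrow> (\<forall>\<^sub>F n in sequentially.
                   AMSE T1 \<theta> b n (k n) < min (AMSE T2 \<theta> b n (k n)) (AMSE T3 \<theta> b n (k n)))))"
proof -
  have th: "\<theta> > 0" and ellpos: "\<forall>\<^sub>F z in at_top. ell z > 0"
    using A1 unfolding assm_A1_def slowly_varying_def by auto
  have bnz: "\<forall>\<^sub>F z in at_top. b z \<noteq> 0" using A2 unfolding assm_A2_def by auto
  define tt where "tt n = ln (real n / real (k n))" for n
  define LL where "LL n = ln (real (k n))" for n
  define B where "B n = b (tt n)" for n
  define a1 where "a1 n = a_n T1 n (k n)" for n
  define a2 where "a2 n = a_n T2 n (k n)" for n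
  define a3 where "a3 n = a_n T3 n (k n)" for n
  have AM: "AMSE T \<theta> b n (k n) = (\<theta> * a_n T n (k n) + B n)^2 + \<theta>^2 / real (k n)" for T n
    by (simp add: AMSE_def B_def tt_def)
  note am = asymp_main[OF k_range k_inf k_log]
  note ba = basic_asymp[OF k_range k_inf k_log]
  have ttlim: "filterlim tt at_top sequentially" using ba(1) by (simp add: tt_def[abs_def])
  have ev_at: "\<forall>\<^sub>F n in sequentially. P (f n)" if "filterlim f at_top sequentially" "\<forall>\<^sub>F z in at_top. P z" for f :: "nat \<Rightarrow> real" and P
    using that by (auto simp: filterlim_iff)
  have lnlim: "filterlim (\<lambda>n. ln (real n)) at_top sequentially"
    by (rule filterlim_compose[OF ln_at_top filterlim_real_sequentially])
  have a3lim: "((\<lambda>n. tt n * a3 n) \<longlongrightarrow> -1) sequentially" using am(1) by (simp add: tt_def a3_def)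
  define R where "R n = 2 * real (k n) / LL n * a2 n" for n
  have Rlim: "(R \<longlongrightarrow> 1) sequentially" using am(2) by (simp add: R_def[abs_def] LL_def a2_def)
  define \<rho>n where "\<rho>n n = b (tt n) / b (ln (real n))" for n
  have \<rho>lim: "(\<rho>n \<longlongrightarrow> 1) sequentially"
  proof -
    have "((\<lambda>n. 1 / (tt n / ln (real n))) \<longlongrightarrow> 1 / 1) sequentially"
      using ba(2) by (intro tendsto_intros) (simp_all add: tt_def)
    then have mu: "((\<lambda>n. ln (real n) / tt n) \<longlongrightarrow> 1) sequentially" by simp
    have xy: "\<forall>\<^sub>F n in sequentially. tt n \<le> ln (real n)" using ba(6) by eventually_elim (simp add: tt_def)
    have "((\<lambda>n. b (ln (real n)) / b (tt n)) \<longlongrightarrow> 1) sequentially"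
      by (rule b_ratio[OF A2 ellpos ttlim mu xy])
    then have "((\<lambda>n. 1 / (b (ln (real n)) / b (tt n))) \<longlongrightarrow> 1 / 1) sequentially"
      by (intro tendsto_intros) simp_all
    then show ?thesis by (simp add: \<rho>n_def[abs_def])
  qed
  have ev0: "\<forall>\<^sub>F n in sequentially. 0 < LL n \<and> 0 < tt n \<and> a1 n = 0 \<and> a3 n < 0 \<and> a2 n > 0
       \<and> b (ln (real n)) \<noteq> 0 \<and> 0 < real (k n)"
  proof -
    have t0: "\<forall>\<^sub>F n in sequentially. 0 < tt n" using ttlim by (simp add: filterlim_at_top_dense)
    have n3: "\<forall>\<^sub>F n in sequentially. tt n * a3 n < 0" using a3lim by (rule order_tendstoD) simp
    have R0: "\<forall>\<^sub>F n in sequentially. R n > 0" using Rlim by (rule order_tendstoD) simp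
    show ?thesis using t0 n3 R0 ba(6) am(3) ev_at[OF lnlim bnz]
    proof eventually_elim
      case (elim n)
      have L: "0 < LL n" "0 < real (k n)" using elim by (auto simp: LL_def)
      have "a3 n < 0" using elim(1,2) by (simp add: mult_less_0_iff)
      moreover have "a2 n > 0"
      proof -
        have p: "0 < 2 * real (k n) / LL n" using L by simp
        have "0 < 2 * real (k n) / LL n * a2 n" using elim(3) unfolding R_def .
        then show ?thesis using p by (rule zero_less_mult_pos)
      qed
      ultimately show ?case using elim L by (simp add: a1_def)
    qed
  qed
  show ?thesis
  proof (intro conjI impI)
    assume H: "(\<forall>\<^sub>F x in at_top. b x \<le> 0) \<and> ((\<lambda>n. ereal (- 4 * b (ln (real n)) * real (k n) / ln (real (k n)))) \<longlongrightarrow> \<alpha>) sequentially"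
    define r where "r n = - 4 * b (ln (real n)) * real (k n) / LL n" for n
    have rlim: "((\<lambda>n. ereal (r n)) \<longlongrightarrow> \<alpha>) sequentially" using H by (simp add: r_def LL_def)
    have Bn: "\<forall>\<^sub>F n in sequentially. B n \<le> 0" using ev_at[OF ttlim, of "\<lambda>x. b x \<le> 0"] H by (simp add: B_def)
    have key: "\<forall>\<^sub>F n in sequentially. 2 * real (k n) / LL n * (\<theta> * a2 n + 2 * B n) = \<theta> * R n - r n * \<rho>n n"
      using ev0 by eventually_elim (simp add: R_def r_def \<rho>n_def B_def field_simps)
    have P3: "\<forall>\<^sub>F n in sequentially. AMSE T1 \<theta> b n (k n) < AMSE T3 \<theta> b n (k n)"
      using ev0 Bn
    proof eventually_elim
      case (elim n)
      have "\<theta> * a3 n < 0" using elim th by (simp add: mult_pos_neg)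
      then have "(\<theta> * a3 n) * (\<theta> * a3 n + 2 * B n) > 0" using elim by (intro mult_neg_neg) auto
      then have "(B n)^2 < (\<theta> * a3 n + B n)^2" by (rule sq_gt)
      then show ?case using elim by (simp add: AM a1_def[symmetric] a3_def[symmetric])
    qed
    show "\<alpha> > ereal \<theta> \<Longrightarrow> \<forall>\<^sub>F n in sequentially. AMSE T2 \<theta> b n (k n) < AMSE T1 \<theta> b n (k n) \<and> AMSE T1 \<theta> b n (k n) < AMSE T3 \<theta> b n (k n)"
    proof -
      assume al: "\<alpha> > ereal \<theta>"
      obtain c where c: "ereal \<theta> < ereal c" "ereal c < \<alpha>" using ereal_dense2[OF al] by blast
      have c1: "\<theta> < c" using c by simp
      have E1: "\<forall>\<^sub>F n in sequentially. c < r n" using order_tendstoD(1)[OF rlim c(2)] by simp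
      have E2: "\<forall>\<^sub>F n in sequentially. (c + \<theta>)/2 < c * \<rho>n n"
      proof -
        have "((\<lambda>n. c * \<rho>n n) \<longlongrightarrow> c * 1) sequentially" by (intro tendsto_intros \<rho>lim)
        then show ?thesis by (rule order_tendstoD) (use c1 in simp)
      qed
      have E3: "\<forall>\<^sub>F n in sequentially. \<theta> * R n < (c + \<theta>)/2"
      proof -
        have "((\<lambda>n. \<theta> * R n) \<longlongrightarrow> \<theta> * 1) sequentially" by (intro tendsto_intros Rlim)
        then show ?thesis by (rule order_tendstoD) (use c1 in simp)
      qed
      have E4: "\<forall>\<^sub>F n in sequentially. 0 < \<rho>n n" using \<rho>lim by (rule order_tendstoD) simp
      have P2: "\<forall>\<^sub>F n in sequentially. AMSE T2 \<theta> b n (k n) < AMSE T1 \<theta> b n (k n)"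
        using ev0 key E1 E2 E3 E4
      proof eventually_elim
        case (elim n)
        have "c * \<rho>n n < r n * \<rho>n n" using elim by (simp add: mult_strict_right_mono)
        then have q: "2 * real (k n) / LL n * (\<theta> * a2 n + 2 * B n) < 0" using elim by linarith
        have p: "2 * real (k n) / LL n > 0" using elim by simp
        have neg: "\<theta> * a2 n + 2 * B n < 0" by (rule pos_mult_neg_imp[OF p q])
        have "\<theta> * a2 n > 0" using elim th by simp
        then have "(\<theta> * a2 n) * (\<theta> * a2 n + 2 * B n) < 0" using neg by (simp add: mult_pos_neg)
        then have "(\<theta> * a2 n + B n)^2 < (B n)^2" by (rule sq_lt)
        then show ?case using elim by (simp add: AM a1_def[symmetric] a2_def[symmetric])
      qed
      show ?thesis using P2 P3 by eventually_elim simp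
    qed
    show "\<alpha> < ereal \<theta> \<Longrightarrow> \<forall>\<^sub>F n in sequentially. AMSE T1 \<theta> b n (k n) < min (AMSE T2 \<theta> b n (k n)) (AMSE T3 \<theta> b n (k n))"
    proof -
      assume al: "\<alpha> < ereal \<theta>"
      obtain c where c: "\<alpha> < ereal c" "ereal c < ereal \<theta>" using ereal_dense2[OF al] by blast
      have c1: "c < \<theta>" using c by simp
      have E1: "\<forall>\<^sub>F n in sequentially. r n < c" using order_tendstoD(2)[OF rlim c(1)] by simp
      have E2: "\<forall>\<^sub>F n in sequentially. c * \<rho>n n < (c + \<theta>)/2"
      proof -
        have "((\<lambda>n. c * \<rho>n n) \<longlongrightarrow> c * 1) sequentially" by (intro tendsto_intros \<rho>lim)
        then show ?thesis by (rule order_tendstoD) (use c1 in simp)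
      qed
      have E3: "\<forall>\<^sub>F n in sequentially. (c + \<theta>)/2 < \<theta> * R n"
      proof -
        have "((\<lambda>n. \<theta> * R n) \<longlongrightarrow> \<theta> * 1) sequentially" by (intro tendsto_intros Rlim)
        then show ?thesis by (rule order_tendstoD) (use c1 in simp)
      qed
      have E4: "\<forall>\<^sub>F n in sequentially. 0 < \<rho>n n" using \<rho>lim by (rule order_tendstoD) simp
      have P2: "\<forall>\<^sub>F n in sequentially. AMSE T1 \<theta> b n (k n) < AMSE T2 \<theta> b n (k n)"
        using ev0 key E1 E2 E3 E4
      proof eventually_elim
        case (elim n)
        have "r n * \<rho>n n < c * \<rho>n n" using elim by (simp add: mult_strict_right_mono)
        then have q: "2 * real (k n) / LL n * (\<theta> * a2 n + 2 * B n) > 0" using elim by linarith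
        have p: "2 * real (k n) / LL n > 0" using elim by simp
        have pos: "\<theta> * a2 n + 2 * B n > 0" by (rule pos_mult_pos_imp[OF p q])
        have "\<theta> * a2 n > 0" using elim th by simp
        then have "(\<theta> * a2 n) * (\<theta> * a2 n + 2 * B n) > 0" using pos by simp
        then have "(B n)^2 < (\<theta> * a2 n + B n)^2" by (rule sq_gt)
        then show ?case using elim by (simp add: AM a1_def[symmetric] a2_def[symmetric])
      qed
      show ?thesis using P2 P3 by eventually_elim simp
    qed
  next
    assume H: "(\<forall>\<^sub>F x in at_top. b x \<ge> 0) \<and> ((\<lambda>x. ereal (2 * x * b x)) \<longlongrightarrow> \<beta>) at_top"
    have Bn: "\<forall>\<^sub>F n in sequentially. B n \<ge> 0" using ev_at[OF ttlim, of "\<lambda>x. b x \<ge> 0"] H by (simp add: B_def)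
    have blim: "((\<lambda>n. ereal (2 * tt n * B n)) \<longlongrightarrow> \<beta>) sequentially"
      using filterlim_compose[OF conjunct2[OF H] ttlim] by (simp add: B_def)
    have thlim: "((\<lambda>n. \<theta> * (tt n * a3 n)) \<longlongrightarrow> \<theta> * -1) sequentially" by (intro tendsto_intros a3lim)
    have P2: "\<forall>\<^sub>F n in sequentially. AMSE T1 \<theta> b n (k n) < AMSE T2 \<theta> b n (k n)"
      using ev0 Bn
    proof eventually_elim
      case (elim n)
      have pa: "\<theta> * a2 n > 0" using elim th by simp
      moreover have "\<theta> * a2 n + 2 * B n > 0" using elim pa by linarith
      ultimately have "(\<theta> * a2 n) * (\<theta> * a2 n + 2 * B n) > 0" by simp
      then have "(B n)^2 < (\<theta> * a2 n + B n)^2" by (rule sq_gt)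
      then show ?case using elim by (simp add: AM a1_def[symmetric] a2_def[symmetric])
    qed
    have W: "\<forall>\<^sub>F n in sequentially. tt n * (\<theta> * a3 n + 2 * B n) = \<theta> * (tt n * a3 n) + 2 * tt n * B n"
      by (simp add: algebra_simps)
    show "\<beta> > ereal \<theta> \<Longrightarrow> \<forall>\<^sub>F n in sequentially. AMSE T3 \<theta> b n (k n) < AMSE T1 \<theta> b n (k n) \<and> AMSE T1 \<theta> b n (k n) < AMSE T2 \<theta> b n (k n)"
    proof -
      assume be: "\<beta> > ereal \<theta>"
      obtain c where c: "ereal \<theta> < ereal c" "ereal c < \<beta>" using ereal_dense2[OF be] by blast
      have c1: "\<theta> < c" using c by simp
      have E1: "\<forall>\<^sub>F n in sequentially. c < 2 * tt n * B n" using order_tendstoD(1)[OF blim c(2)] by simp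
      have E2: "\<forall>\<^sub>F n in sequentially. -(c + \<theta>)/2 < \<theta> * (tt n * a3 n)"
        using thlim by (rule order_tendstoD) (use c1 in simp)
      have P3: "\<forall>\<^sub>F n in sequentially. AMSE T3 \<theta> b n (k n) < AMSE T1 \<theta> b n (k n)"
        using ev0 W E1 E2
      proof eventually_elim
        case (elim n)
        have q: "tt n * (\<theta> * a3 n + 2 * B n) > 0" by (subst elim(2)) (rule lin1[OF elim(3) elim(4) c1])
        have pos: "\<theta> * a3 n + 2 * B n > 0" using elim by (intro pos_mult_pos_imp[OF _ q]) simp
        have "\<theta> * a3 n < 0" using elim th by (simp add: mult_pos_neg)
        then have "(\<theta> * a3 n) * (\<theta> * a3 n + 2 * B n) < 0" using pos by (simp add: mult_neg_pos)
        then have "(\<theta> * a3 n + B n)^2 < (B n)^2" by (rule sq_lt)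
        then show ?case using elim by (simp add: AM a1_def[symmetric] a3_def[symmetric])
      qed
      show ?thesis using P2 P3 by eventually_elim simp
    qed
    show "\<beta> < ereal \<theta> \<Longrightarrow> \<forall>\<^sub>F n in sequentially. AMSE T1 \<theta> b n (k n) < min (AMSE T2 \<theta> b n (k n)) (AMSE T3 \<theta> b n (k n))"
    proof -
      assume be: "\<beta> < ereal \<theta>"
      obtain c where c: "\<beta> < ereal c" "ereal c < ereal \<theta>" using ereal_dense2[OF be] by blast
      have c1: "c < \<theta>" using c by simp
      have E1: "\<forall>\<^sub>F n in sequentially. 2 * tt n * B n < c" using order_tendstoD(2)[OF blim c(1)] by simp
      have E2: "\<forall>\<^sub>F n in sequentially. \<theta> * (tt n * a3 n) < -(c + \<theta>)/2"
        using thlim by (rule order_tendstoD) (use c1 in simp)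
      have P3: "\<forall>\<^sub>F n in sequentially. AMSE T1 \<theta> b n (k n) < AMSE T3 \<theta> b n (k n)"
        using ev0 W E1 E2
      proof eventually_elim
        case (elim n)
        have q: "tt n * (\<theta> * a3 n + 2 * B n) < 0" by (subst elim(2)) (rule lin2[OF elim(3) elim(4) c1])
        have neg: "\<theta> * a3 n + 2 * B n < 0" using elim by (intro pos_mult_neg_imp[OF _ q]) simp
        have "\<theta> * a3 n < 0" using elim th by (simp add: mult_pos_neg)
        then have "(\<theta> * a3 n) * (\<theta> * a3 n + 2 * B n) > 0" using neg by (simp add: mult_neg_neg)
        then have "(B n)^2 < (\<theta> * a3 n + B n)^2" by (rule sq_gt)
        then show ?case using elim by (simp add: AM a1_def[symmetric] a3_def[symmetric])
      qed
      show ?thesis using P2 P3 by eventually_elim simp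
    qed
  qed
qed

end
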